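(* The lifts $\Delta_C$ of the strongly connected components $C$ of $G$ are Morse sets for the flow $\psi$ on $\Delta$; that is, the collection $\{\Delta_C : C \text{ a strongly connected component of } G\}$ consists of non-void, pairwise disjoint, invariant, isolated, compact sets and there are no cycles between them (so that it is a Morse decomposition of $(\Delta,\psi)$).
   Context: $G$ is a finite directed graph (loops allowed) with vertex set $V$. $\Omega$ is the set of bi-infinite paths in $G$, i.e. sequences $(x_i)_{i\in\mathbb Z}\in V^{\mathbb Z}$ such that for every $i$ there is an edge from $x_i$ to $x_{i+1}$. Fix $h>0$. $\bar\Delta$ is the set of functions $x:\mathbb R\to V$ that are constant on each interval $[nh,(n+1)h)$, $n\in\mathbb Z$, and satisfy $(x(ih))_{i\in\mathbb Z}\in\Omega$. $\Delta=\{x(\cdot+t): x\in\bar\Delta,\ t\in\mathbb R\}$, with metric $d(x,y)=\sum_{i\in\mathbb Z}4^{-|i|}\frac1h\int_{ih}^{(i+1)h}\delta(x,y,t)\,dt$, where $\delta(x,y,t)=1$ if $x(t)\ne y(t)$ and $0$ otherwise. The flow $\psi:\mathbb R\times\Delta\to\Delta$ is $\psi(t,x)=x(\cdot+t)$. A strongly connected component of $G$ is a maximal nonempty set $C\subseteq V$ such that for all $u,v\in C$ (including $u=v$) there is a directed path of positive length from $u$ to $v$ with all vertices in $C$. The lift of $C$ is $\Delta_C=\{f\in\Delta: f(t)\in C \text{ for all } t\in\mathbb R\}$. For $x\in\Delta$, $\omega(x)$ (resp. $\alpha(x)$) is the set of limits of $\psi(t_k,x)$ along sequences $t_k\to+\infty$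 (resp. $t_k\to-\infty$). A set $K$ is invariant if $\psi(t,K)\subseteq K$ for all $t\in\mathbb R$; isolated if there is a neighborhood $N$ of $K$ with $K\subset\operatorname{int}N$ such that $\psi(t,x)\in N$ for all $t\in\mathbb R$ implies $x\in K$. A Morse decomposition is a finite collection $\{\mathcal M_1,\dots,\mathcal M_n\}$ of non-void, pairwise disjoint, invariant, isolated, compact sets such that (1) $\omega(x),\alpha(x)\subseteq\bigcup_i\mathcal M_i$ for every $x$, and (2) (no cycles) if there are Morse sets $\mathcal M_{j_0},\dots,\mathcal M_{j_l}$ and points $x_1,\dots,x_l\notin\bigcup_i\mathcal M_i$ with $\alpha(x_m)\subseteq\mathcal M_{j_{m-1}}$ and $\omega(x_m)\subseteq\mathcal M_{j_m}$ for $m=1,\dots,l$, then $\mathcal M_{j_0}\ne\mathcal M_{j_l}$. *)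

theory Defs
  imports "HOL-Analysis.Analysis"
begin

definition Omega :: "'v set \<Rightarrow> ('v \<times> 'v) set \<Rightarrow> (int \<Rightarrow> 'v) set" where
  "Omega V E = {x. \<forall>i::int. x i \<in> V \<and> (x i, x (i + 1)) \<in> E}"

definition Deltabar :: "'v set \<Rightarrow> ('v \<times> 'v) set \<Rightarrow> real \<Rightarrow> (real \<Rightarrow> 'v) set" where
  "Deltabar V E h = {x. (\<forall>n::int. \<forall>t. of_int n * h \<le> t \<and> t < (of_int n + 1) * h \<longrightarrow> x t = x (of_int n * h))
                        \<and> (\<lambda>i::int. x (of_int i * h)) \<in> Omega V E}"

definition Delta :: "'v set \<Rightarrow> ('v \<times> 'v) set \<Rightarrow> real \<Rightarrow> (real \<Rightarrow> 'v) set" where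
  "Delta V E h = {(\<lambda>s. x (s + t)) | x t. x \<in> Deltabar V E h}"

definition flowdist :: "real \<Rightarrow> (real \<Rightarrow> 'v) \<Rightarrow> (real \<Rightarrow> 'v) \<Rightarrow> real" where
  "flowdist h x y = (\<Sum>\<^sub>\<infinity>i::int. (1 / 4) ^ nat \<bar>i\<bar> * ((1 / h) *
       integral {of_int i * h .. (of_int i + 1) * h} (\<lambda>t. if x t \<noteq> y t then 1 else 0)))"

definition psi :: "real \<Rightarrow> (real \<Rightarrow> 'v) \<Rightarrow> (real \<Rightarrow> 'v)" where
  "psi t x = (\<lambda>s. x (s + t))"

definition flowtop :: "'v set \<Rightarrow> ('v \<times> 'v) set \<Rightarrow> real \<Rightarrow> (real \<Rightarrow> 'v) topology" where
  "flowtop V E h = Metric_space.mtopology (Delta V E h) (flowdist h)"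

definition strongly_connected_set :: "('v \<times> 'v) set \<Rightarrow> 'v set \<Rightarrow> bool" where
  "strongly_connected_set E C \<longleftrightarrow> C \<noteq> {} \<and> (\<forall>u\<in>C. \<forall>v\<in>C. (u, v) \<in> (E \<inter> (C \<times> C))\<^sup>+)"

definition scc :: "'v set \<Rightarrow> ('v \<times> 'v) set \<Rightarrow> 'v set \<Rightarrow> bool" where
  "scc V E C \<longleftrightarrow> C \<subseteq> V \<and> strongly_connected_set E C \<and>
     (\<forall>C'. C \<subseteq> C' \<and> C' \<subseteq> V \<and> strongly_connected_set E C' \<longrightarrow> C' = C)"

definition lift :: "'v set \<Rightarrow> ('v \<times> 'v) set \<Rightarrow> real \<Rightarrow> 'v set \<Rightarrow> (real \<Rightarrow> 'v) set" where
  "lift V E h C = {f \<in> Delta V E h. \<forall>t. f t \<in> C}"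

definition omega_lim :: "'v set \<Rightarrow> ('v \<times> 'v) set \<Rightarrow> real \<Rightarrow> (real \<Rightarrow> 'v) \<Rightarrow> (real \<Rightarrow> 'v) set" where
  "omega_lim V E h x = {y. \<exists>tk::nat \<Rightarrow> real. filterlim tk at_top sequentially \<and>
      limitin (flowtop V E h) (\<lambda>k. psi (tk k) x) y sequentially}"

definition alpha_lim :: "'v set \<Rightarrow> ('v \<times> 'v) set \<Rightarrow> real \<Rightarrow> (real \<Rightarrow> 'v) \<Rightarrow> (real \<Rightarrow> 'v) set" where
  "alpha_lim V E h x = {y. \<exists>tk::nat \<Rightarrow> real. filterlim tk at_bot sequentially \<and>
      limitin (flowtop V E h) (\<lambda>k. psi (tk k) x) y sequentially}"

definition invariant :: "(real \<Rightarrow> 'v) set \<Rightarrow> bool" where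
  "invariant K \<longleftrightarrow> (\<forall>t. \<forall>x\<in>K. psi t x \<in> K)"

definition isolated :: "'v set \<Rightarrow> ('v \<times> 'v) set \<Rightarrow> real \<Rightarrow> (real \<Rightarrow> 'v) set \<Rightarrow> bool" where
  "isolated V E h K \<longleftrightarrow> (\<exists>N. N \<subseteq> Delta V E h \<and> K \<subseteq> (flowtop V E h) interior_of N \<and>
      (\<forall>x \<in> Delta V E h. (\<forall>t. psi t x \<in> N) \<longrightarrow> x \<in> K))"

definition morse_decomposition :: "'v set \<Rightarrow> ('v \<times> 'v) set \<Rightarrow> real \<Rightarrow> (real \<Rightarrow> 'v) set set \<Rightarrow> bool" where
  "morse_decomposition V E h \<M> \<longleftrightarrow>
     finite \<M> \<and>
     (\<forall>K\<in>\<M>. K \<noteq> {} \<and> K \<subseteq> Delta V E h \<and> invariant K \<and> isolated V E h K \<and> compactin (flowtop V E h) K) \<and>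
     (\<forall>K\<in>\<M>. \<forall>K'\<in>\<M>. K \<noteq> K' \<longrightarrow> K \<inter> K' = {}) \<and>
     (\<forall>x \<in> Delta V E h. omega_lim V E h x \<subseteq> \<Union>\<M> \<and> alpha_lim V E h x \<subseteq> \<Union>\<M>) \<and>
     (\<forall>l::nat. \<forall>j::nat \<Rightarrow> (real \<Rightarrow> 'v) set. \<forall>x::nat \<Rightarrow> (real \<Rightarrow> 'v).
        l \<ge> 1 \<and> (\<forall>m\<le>l. j m \<in> \<M>) \<and>
        (\<forall>m\<in>{1..l}. x m \<in> Delta V E h \<and> x m \<notin> \<Union>\<M> \<and>
            alpha_lim V E h (x m) \<subseteq> j (m - 1) \<and> omega_lim V E h (x m) \<subseteq> j m)
        \<longrightarrow> j 0 \<noteq> j l)"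

end

theory Submission
  imports Defs
begin

definition Cl :: "('v \<times> 'v) set \<Rightarrow> 'v \<Rightarrow> 'v set" where
  "Cl E r = {w. (r,w) \<in> E\<^sup>+ \<and> (w,r) \<in> E\<^sup>+}"

lemma Cl_path:
  assumes "(a,b) \<in> E\<^sup>+"
  shows "a \<in> Cl E r \<Longrightarrow> (b,r) \<in> E\<^sup>+ \<Longrightarrow> (a,b) \<in> (E \<inter> (Cl E r \<times> Cl E r))\<^sup>+"
  using assms
proof (induction rule: trancl_induct)
  case (base y)
  then have "(r,y) \<in> E\<^sup>+" unfolding Cl_def
    by (auto intro: trancl_into_trancl)
  then have "y \<in> Cl E r" using base unfolding Cl_def by auto
  then show ?case using base by auto
next
  case (step y z)
  have yr: "(y,r) \<in> E\<^sup>+" using step by auto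
  have ra: "(r,a) \<in> E\<^sup>+" using step.prems(1) unfolding Cl_def by auto
  have ry: "(r,y) \<in> E\<^sup>+" using ra step(1) by (rule trancl_trans)
  have y: "y \<in> Cl E r" using ry yr unfolding Cl_def by auto
  have rz: "(r,z) \<in> E\<^sup>+" using ry step(2) by (rule trancl_into_trancl)
  have z: "z \<in> Cl E r" using rz step.prems(2) unfolding Cl_def by auto
  have yz: "(y,z) \<in> E \<inter> (Cl E r \<times> Cl E r)" using y z step(2) by auto
  show ?case using step.IH[OF step.prems(1) yr] yz by (rule trancl_into_trancl)
qed

lemma Cl_sc:
  assumes "(r,r) \<in> E\<^sup>+"
  shows "strongly_connected_set E (Cl E r)" "r \<in> Cl E r"
proof -
  show r: "r \<in> Cl E r" using assms by (simp add: Cl_def)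
  show "strongly_connected_set E (Cl E r)"
    unfolding strongly_connected_set_def
  proof (intro conjI ballI)
    show "Cl E r \<noteq> {}" using r by auto
    fix u v assume u: "u \<in> Cl E r" and v: "v \<in> Cl E r"
    have ur: "(u,r) \<in> E\<^sup>+" and rv: "(r,v) \<in> E\<^sup>+" and vr: "(v,r) \<in> E\<^sup>+"
      using u v unfolding Cl_def by auto
    have "(u,v) \<in> E\<^sup>+" using ur rv by (rule trancl_trans)
    then show "(u,v) \<in> (E \<inter> (Cl E r \<times> Cl E r))\<^sup>+"
      using Cl_path u vr by metis
  qed
qed

lemma sc_trancl:
  assumes "strongly_connected_set E S" "u \<in> S" "v \<in> S"
  shows "(u,v) \<in> E\<^sup>+"
proof -
  have "(u,v) \<in> (E \<inter> (S \<times> S))\<^sup>+" using assms unfolding strongly_connected_set_def by blast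
  then show ?thesis by (rule trancl_mono) auto
qed

lemma sc_subset_V:
  assumes "E \<subseteq> V \<times> V" "strongly_connected_set E S"
  shows "S \<subseteq> V"
proof
  fix u assume "u \<in> S"
  then have "(u,u) \<in> E\<^sup>+" using sc_trancl[OF assms(2)] by metis
  then obtain w where "(u,w) \<in> E" by (rule converse_tranclE) auto
  then show "u \<in> V" using assms by auto
qed

lemma sc_union:
  assumes "strongly_connected_set E S" "strongly_connected_set E T" "S \<inter> T \<noteq> {}"
  shows "strongly_connected_set E (S \<union> T)"
  unfolding strongly_connected_set_def
proof (intro conjI ballI)
  show "S \<union> T \<noteq> {}" using assms(3) by auto
  obtain c where c: "c \<in> S" "c \<in> T" using assms(3) by auto
  have mS: "(a,b) \<in> (E \<inter> (S \<union> T) \<times> (S \<union> T))\<^sup>+" if "a \<in> S" "b \<in> S" for a b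
  proof -
    have "(a,b) \<in> (E \<inter> (S \<times> S))\<^sup>+" using assms(1) that unfolding strongly_connected_set_def by blast
    then show ?thesis by (rule trancl_mono) auto
  qed
  have mT: "(a,b) \<in> (E \<inter> (S \<union> T) \<times> (S \<union> T))\<^sup>+" if "a \<in> T" "b \<in> T" for a b
  proof -
    have "(a,b) \<in> (E \<inter> (T \<times> T))\<^sup>+" using assms(2) that unfolding strongly_connected_set_def by blast
    then show ?thesis by (rule trancl_mono) auto
  qed
  fix u v assume "u \<in> S \<union> T" "v \<in> S \<union> T"
  then show "(u, v) \<in> (E \<inter> (S \<union> T) \<times> (S \<union> T))\<^sup>+"
  proof -
    have uc: "(u,c) \<in> (E \<inter> (S \<union> T) \<times> (S \<union> T))\<^sup>+"
      using \<open>u \<in> S \<union> T\<close> mS mT c by blast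
    have cv: "(c,v) \<in> (E \<inter> (S \<union> T) \<times> (S \<union> T))\<^sup>+"
      using \<open>v \<in> S \<union> T\<close> mS mT c by blast
    show ?thesis using uc cv by (rule trancl_trans)
  qed
qed

lemma scc_absorb:
  assumes "E \<subseteq> V \<times> V" "scc V E C" "strongly_connected_set E S" "S \<inter> C \<noteq> {}"
  shows "S \<subseteq> C"
proof -
  have C: "C \<subseteq> V" "strongly_connected_set E C"
    and max: "\<And>C'. C \<subseteq> C' \<Longrightarrow> C' \<subseteq> V \<Longrightarrow> strongly_connected_set E C' \<Longrightarrow> C' = C"
    using assms(2) unfolding scc_def by auto
  have "S \<inter> C = C \<inter> S" by auto
  then have "strongly_connected_set E (C \<union> S)"
    using sc_union[OF C(2) assms(3)] assms(4) by simp
  moreover have "S \<subseteq> V" using sc_subset_V[OF assms(1,3)] .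
  then have "C \<union> S \<subseteq> V" using C(1) by simp
  ultimately have "C \<union> S = C" using max[of "C \<union> S"] by simp
  then show ?thesis by (metis Un_upper2)
qed

lemma scc_eq:
  assumes "E \<subseteq> V \<times> V" "scc V E C" "scc V E D" "C \<inter> D \<noteq> {}"
  shows "C = D"
proof -
  have sC: "strongly_connected_set E C" and sD: "strongly_connected_set E D"
    using assms(2,3) unfolding scc_def by auto
  have "D \<inter> C \<noteq> {}" using assms(4) by auto
  then have "D \<subseteq> C" using scc_absorb[OF assms(1,2) sD] by simp
  moreover have "C \<subseteq> D" using scc_absorb[OF assms(1,3) sC assms(4)] .
  ultimately show ?thesis by simp
qed

lemma sc_in_scc:
  assumes "E \<subseteq> V \<times> V" "strongly_connected_set E S"
  shows "\<exists>C. scc V E C \<and> S \<subseteq> C"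
proof -
  obtain r where r: "r \<in> S" using assms unfolding strongly_connected_set_def by auto
  have rr: "(r,r) \<in> E\<^sup>+" using sc_trancl[OF assms(2)] r by metis
  note cl = Cl_sc[OF rr]
  have "scc V E (Cl E r)"
    unfolding scc_def
  proof (intro conjI allI impI)
    show "Cl E r \<subseteq> V" using sc_subset_V assms cl by blast
    show "strongly_connected_set E (Cl E r)" by (rule cl)
    fix C' assume C': "Cl E r \<subseteq> C' \<and> C' \<subseteq> V \<and> strongly_connected_set E C'"
    have "C' \<subseteq> Cl E r"
    proof
      fix w assume "w \<in> C'"
      have rC: "r \<in> C'" using C' cl by auto
      have "(r,w) \<in> E\<^sup>+" "(w,r) \<in> E\<^sup>+" using sc_trancl[of E C'] C' rC \<open>w \<in> C'\<close> by metis+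
      then show "w \<in> Cl E r" unfolding Cl_def by auto
    qed
    then show "C' = Cl E r" using C' by blast
  qed
  moreover have "S \<subseteq> Cl E r"
  proof
    fix w assume "w \<in> S"
    have "(r,w) \<in> E\<^sup>+" "(w,r) \<in> E\<^sup>+" using sc_trancl[OF assms(2)] r \<open>w \<in> S\<close> by metis+
    then show "w \<in> Cl E r" unfolding Cl_def by auto
  qed
  ultimately show ?thesis by blast
qed

lemma scc_between:
  assumes "E \<subseteq> V \<times> V" "scc V E C" "c \<in> C" "c' \<in> C" "(c,v) \<in> E\<^sup>*" "(v,c') \<in> E\<^sup>*"
  shows "v \<in> C"
proof -
  have sc: "strongly_connected_set E C" using assms unfolding scc_def by auto
  have cc: "(c,c) \<in> E\<^sup>+" "(c',c) \<in> E\<^sup>+" using sc_trancl[OF sc] assms(3,4) by metis+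
  have "(c,v) \<in> E\<^sup>+"
  proof (cases "c = v")
    case True then show ?thesis using cc by simp
  next
    case False then show ?thesis using assms(5) by (simp add: rtrancl_eq_or_trancl)
  qed
  moreover have "(v,c) \<in> E\<^sup>+" using assms(6) cc(2) by (rule rtrancl_trancl_trancl)
  ultimately have "v \<in> Cl E c" unfolding Cl_def by auto
  moreover have "Cl E c \<inter> C \<noteq> {}" using Cl_sc(2)[OF cc(1)] assms(3) by auto
  then have "Cl E c \<subseteq> C" using scc_absorb[OF assms(1,2) Cl_sc(1)[OF cc(1)]] by simp
  ultimately show ?thesis by blast
qed

lemma sc_converse:
  "strongly_connected_set (E\<inverse>) S \<longleftrightarrow> strongly_connected_set E S"
proof -
  have "(E\<inverse> \<inter> S \<times> S) = (E \<inter> S \<times> S)\<inverse>" by auto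
  then have "(E\<inverse> \<inter> S \<times> S)\<^sup>+ = ((E \<inter> S \<times> S)\<^sup>+)\<inverse>" by (simp add: trancl_converse)
  then show ?thesis unfolding strongly_connected_set_def by auto
qed

definition stp :: "real \<Rightarrow> (int \<Rightarrow> 'v) \<Rightarrow> real \<Rightarrow> real \<Rightarrow> 'v" where
  "stp h w c = (\<lambda>u. w \<lfloor>(u + c) / h\<rfloor>)"

definition Iv :: "real \<Rightarrow> int \<Rightarrow> real set" where
  "Iv h i = {of_int i * h .. (of_int i + 1) * h}"

definition mu :: "real \<Rightarrow> (real \<Rightarrow> 'v) \<Rightarrow> (real \<Rightarrow> 'v) \<Rightarrow> int \<Rightarrow> real" where
  "mu h f g i = measure lborel ({u. f u \<noteq> g u} \<inter> Iv h i)"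

definition wt :: "int \<Rightarrow> real" where
  "wt i = (1/4) ^ nat \<bar>i\<bar>"

definition isstp :: "real \<Rightarrow> (real \<Rightarrow> 'v) \<Rightarrow> bool" where
  "isstp h f \<longleftrightarrow> (\<exists>w c. f = stp h w c)"

lemma floor_div_eq:
  assumes "h > 0"
  shows "\<lfloor>u / h\<rfloor> = n \<longleftrightarrow> of_int n * h \<le> u \<and> u < (of_int n + 1) * h"
  using assms by (simp add: floor_eq_iff pos_le_divide_eq pos_divide_less_eq)

lemma Delta_rep:
  assumes "h > 0"
  shows "f \<in> Delta V E h \<longleftrightarrow> (\<exists>w c. w \<in> Omega V E \<and> f = stp h w c)"
proof
  assume "f \<in> Delta V E h"
  then obtain x t where f: "f = (\<lambda>s. x (s + t))" and x: "x \<in> Deltabar V E h"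
    unfolding Delta_def by auto
  define w where "w = (\<lambda>i::int. x (of_int i * h))"
  have w: "w \<in> Omega V E" using x unfolding Deltabar_def w_def by auto
  have xw: "x u = w \<lfloor>u / h\<rfloor>" for u
  proof -
    let ?n = "\<lfloor>u/h\<rfloor>"
    have "of_int ?n * h \<le> u \<and> u < (of_int ?n + 1) * h" using floor_div_eq[OF assms] by blast
    then show ?thesis using x unfolding Deltabar_def w_def by blast
  qed
  have "f = stp h w t" unfolding f stp_def by (rule ext) (simp add: xw)
  then show "\<exists>w c. w \<in> Omega V E \<and> f = stp h w c" using w by blast
next
  assume "\<exists>w c. w \<in> Omega V E \<and> f = stp h w c"
  then obtain w c where w: "w \<in> Omega V E" and f: "f = stp h w c" by blast
  define x where "x = (\<lambda>u. w \<lfloor>u / h\<rfloor>)"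
  have xi: "x (of_int i * h) = w i" for i :: int using assms by (simp add: x_def)
  have "x \<in> Deltabar V E h" unfolding Deltabar_def
  proof (intro CollectI conjI allI impI)
    fix n :: int and t assume "of_int n * h \<le> t \<and> t < (of_int n + 1) * h"
    then have "\<lfloor>t/h\<rfloor> = n" using floor_div_eq[OF assms] by blast
    then show "x t = x (of_int n * h)" using xi by (simp add: x_def)
  next
    show "(\<lambda>i. x (of_int i * h)) \<in> Omega V E" using w xi by simp
  qed
  moreover have "f = (\<lambda>s. x (s + c))" unfolding f stp_def x_def by simp
  ultimately show "f \<in> Delta V E h" unfolding Delta_def by blast
qed

lemma Delta_isstp: "h > 0 \<Longrightarrow> f \<in> Delta V E h \<Longrightarrow> isstp h f"
  using Delta_rep unfolding isstp_def by blast

lemma pair_floor_meas: "(\<lambda>u::real. (\<lfloor>(u+c)/h\<rfloor>, \<lfloor>(u+c')/h\<rfloor>)) \<in> measurable borel (count_space UNIV)"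
proof -
  have "(\<lambda>u::real. (\<lfloor>(u+c)/h\<rfloor>, \<lfloor>(u+c')/h\<rfloor>)) \<in> measurable borel (count_space (UNIV::int set) \<Otimes>\<^sub>M count_space (UNIV::int set))"
    by measurable
  moreover have "count_space (UNIV::int set) \<Otimes>\<^sub>M count_space (UNIV::int set) = count_space UNIV"
    by (simp add: pair_measure_countable)
  ultimately show ?thesis by simp
qed

lemma stp_neq_borel:
  assumes "isstp h f" "isstp h g"
  shows "{u. f u \<noteq> g u} \<in> sets borel"
proof -
  obtain w c w' c' where f: "f = stp h w c" and g: "g = stp h w' c'"
    using assms unfolding isstp_def by blast
  have "(\<lambda>u::real. (\<lfloor>(u+c)/h\<rfloor>, \<lfloor>(u+c')/h\<rfloor>)) -` {p. w (fst p) \<noteq> w' (snd p)} \<inter> space borel \<in> sets borel"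
    by (rule measurable_sets[OF pair_floor_meas]) simp
  then show ?thesis by (simp add: vimage_def f g stp_def)
qed

lemma Iv_fmeas: "Iv h i \<in> fmeasurable lborel"
  unfolding Iv_def by (metis cbox_interval fmeasurable_cbox)

lemma Iv_sets: "Iv h i \<in> sets borel"
  unfolding Iv_def by simp

lemma D_fmeas:
  assumes "isstp h f" "isstp h g"
  shows "{u. f u \<noteq> g u} \<inter> Iv h i \<in> fmeasurable lborel"
proof -
  have "Iv h i \<inter> {u. f u \<noteq> g u} \<in> fmeasurable lborel"
    using fmeasurable_Int_fmeasurable[OF Iv_fmeas] stp_neq_borel[OF assms] by simp
  then show ?thesis by (simp add: Int_commute)
qed

lemma integral_mu:
  assumes "isstp h f" "isstp h g"
  shows "integral (Iv h i) (\<lambda>t. if f t \<noteq> g t then 1 else 0) = mu h f g i"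
proof -
  let ?S = "{u. f u \<noteq> g u}"
  have eq: "(\<lambda>t. if f t \<noteq> g t then 1 else 0) = (indicator ?S :: real \<Rightarrow> real)"
    by (rule ext) (simp add: indicator_def)
  have sb: "?S \<inter> Iv h i \<in> sets lborel" using D_fmeas[OF assms] by (simp add: fmeasurable_def)
  have "?S \<inter> Iv h i \<in> lmeasurable"
  proof -
    have "Iv h i \<in> lmeasurable" unfolding Iv_def by (metis cbox_interval lmeasurable_cbox)
    moreover have "?S \<in> sets lebesgue" using stp_neq_borel[OF assms] by simp
    ultimately have "Iv h i \<inter> ?S \<in> lmeasurable" by (rule fmeasurable_Int_fmeasurable)
    then show ?thesis by (simp add: Int_commute)
  qed
  then have "integral (Iv h i) (indicator ?S) = measure lebesgue (?S \<inter> Iv h i)"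
    by (rule integral_indicator)
  also have "\<dots> = measure lborel (?S \<inter> Iv h i)" using sb by simp
  finally show ?thesis unfolding eq mu_def .
qed

lemma mu_nonneg: "0 \<le> mu h f g i"
  unfolding mu_def by simp

lemma mu_le:
  assumes "isstp h f" "isstp h g" "h > 0"
  shows "mu h f g i \<le> h"
proof -
  have "mu h f g i \<le> measure lborel (Iv h i)"
    unfolding mu_def using D_fmeas[OF assms(1,2)] Iv_fmeas
    by (intro measure_mono_fmeasurable) (auto simp: fmeasurable_def)
  also have "\<dots> = h" using assms(3) by (simp add: Iv_def algebra_simps)
  finally show ?thesis .
qed

lemma geo_partial:
  fixes r :: real
  assumes "0 \<le> r" "r \<le> 1/2"
  shows "(\<Sum>i\<in>{-int N..int N}. r ^ nat \<bar>i\<bar>) \<le> 3 - 2 * r ^ N"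
proof (induction N)
  case 0
  then show ?case by simp
next
  case (Suc N)
  have set: "{-int (Suc N)..int (Suc N)} = insert (-int (Suc N)) (insert (int (Suc N)) {-int N..int N})"
    by auto
  have "(\<Sum>i\<in>{-int (Suc N)..int (Suc N)}. r ^ nat \<bar>i\<bar>) = r ^ Suc N + r ^ Suc N + (\<Sum>i\<in>{-int N..int N}. r ^ nat \<bar>i\<bar>)"
  proof -
    have a: "r ^ nat \<bar>- int (Suc N)\<bar> = r ^ Suc N" by (simp only: abs_minus_cancel abs_of_nat nat_int)
    have b: "r ^ nat \<bar>int (Suc N)\<bar> = r ^ Suc N" by (simp only: abs_of_nat nat_int)
    have n1: "- int (Suc N) \<notin> insert (int (Suc N)) {-int N..int N}" by auto
    have n2: "int (Suc N) \<notin> {-int N..int N}" by auto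
    show ?thesis unfolding set sum.insert[OF finite_insert[THEN iffD2, OF finite_atLeastAtMost_int] n1]
      sum.insert[OF finite_atLeastAtMost_int n2] a b by simp
  qed
  also have "\<dots> \<le> 2 * r ^ Suc N + 3 - 2 * r ^ N" using Suc by simp
  also have "\<dots> \<le> 3 - 2 * r ^ Suc N"
  proof -
    have "r * r ^ N \<le> (1/2) * r ^ N" using assms by (intro mult_right_mono) auto
    then show ?thesis by simp
  qed
  finally show ?case .
qed

lemma finite_int_bounded:
  fixes F :: "int set"
  assumes "finite F"
  shows "\<exists>N::nat. F \<subseteq> {-int N..int N}"
proof -
  define N where "N = (\<Sum>i\<in>F. nat \<bar>i\<bar>)"
  have "nat \<bar>i\<bar> \<le> N" if "i \<in> F" for i
    unfolding N_def using member_le_sum[of i F "\<lambda>i. nat \<bar>i\<bar>"] assms that by simp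
  then have "F \<subseteq> {-int N..int N}" by force
  then show ?thesis by blast
qed

lemma geo_fin:
  fixes r :: real
  assumes "0 \<le> r" "r \<le> 1/2" "finite F"
  shows "(\<Sum>i\<in>F. r ^ nat \<bar>i\<bar>) \<le> 3"
proof -
  obtain N where N: "F \<subseteq> {-int N..int N}" using finite_int_bounded[OF assms(3)] by blast
  have "(\<Sum>i\<in>F. r ^ nat \<bar>i\<bar>) \<le> (\<Sum>i\<in>{-int N..int N}. r ^ nat \<bar>i\<bar>)"
    using N assms by (intro sum_mono2) auto
  also have "\<dots> \<le> 3 - 2 * r ^ N" by (rule geo_partial[OF assms(1,2)])
  also have "\<dots> \<le> 3" using assms by simp
  finally show ?thesis .
qed

lemma geo_summable:
  fixes r :: real
  assumes "0 \<le> r" "r \<le> 1/2"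
  shows "(\<lambda>i::int. r ^ nat \<bar>i\<bar>) summable_on A" "infsum (\<lambda>i::int. r ^ nat \<bar>i\<bar>) A \<le> 3"
proof -
  show sm: "(\<lambda>i::int. r ^ nat \<bar>i\<bar>) summable_on A"
    using assms geo_fin by (intro nonneg_bdd_above_summable_on) (auto simp: bdd_above_def)
  show "infsum (\<lambda>i::int. r ^ nat \<bar>i\<bar>) A \<le> 3"
    using sm by (rule infsum_le_finite_sums) (use geo_fin assms in auto)
qed

lemma wt_summable: "wt summable_on A" "infsum wt A \<le> 3"
  unfolding wt_def using geo_summable[of "1/4"] by auto

lemma wt_pos: "0 < wt i" unfolding wt_def by simp

lemma term_summable:
  assumes "\<And>i. 0 \<le> a i" "\<And>i. a i \<le> 1"
  shows "(\<lambda>i. wt i * a i) summable_on A"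
proof (rule summable_on_comparison_test[OF wt_summable(1)])
  fix i show "wt i * a i \<le> wt i" using assms[of i] wt_pos[of i] by (simp add: mult_left_le)
  show "0 \<le> wt i * a i" using assms[of i] wt_pos[of i] by simp
qed

lemma flowdist_eq:
  assumes "isstp h f" "isstp h g"
  shows "flowdist h f g = infsum (\<lambda>i. wt i * (mu h f g i / h)) UNIV"
  unfolding flowdist_def wt_def
  by (rule infsum_cong) (simp add: integral_mu[OF assms, unfolded Iv_def])

lemma mu_term_summable:
  assumes "isstp h f" "isstp h g" "h > 0"
  shows "(\<lambda>i. wt i * (mu h f g i / h)) summable_on A"
proof (rule term_summable)
  fix i
  show "0 \<le> mu h f g i / h" using mu_nonneg[of h f g i] assms(3) by simp
  show "mu h f g i / h \<le> 1" using mu_le[OF assms, of i] assms(3) by simp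
qed

lemma fd_lower:
  assumes "isstp h f" "isstp h g" "h > 0"
  shows "wt i * (mu h f g i / h) \<le> flowdist h f g"
proof -
  have "infsum (\<lambda>i. wt i * (mu h f g i / h)) {i} \<le> infsum (\<lambda>i. wt i * (mu h f g i / h)) UNIV"
  proof (intro infsum_mono_neutral)
    show "(\<lambda>i. wt i * (mu h f g i / h)) summable_on {i}" "(\<lambda>i. wt i * (mu h f g i / h)) summable_on UNIV"
      using mu_term_summable[OF assms] by auto
    fix x show "0 \<le> wt x * (mu h f g x / h)"
      using wt_pos[of x] mu_nonneg[of h f g x] assms(3) by simp
  qed auto
  then show ?thesis using flowdist_eq[OF assms(1,2)] by simp
qed

lemma stp_const:
  assumes "h > 0"
  shows "\<exists>e>u. \<forall>t\<in>{u..<e}. stp h w c t = stp h w c u"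
proof -
  let ?k = "\<lfloor>(u + c)/h\<rfloor>"
  define e where "e = (of_int ?k + 1) * h - c"
  have "of_int ?k * h \<le> u + c \<and> u + c < (of_int ?k + 1) * h"
    using floor_div_eq[OF assms] by blast
  then have ue: "u < e" unfolding e_def by simp
  have "stp h w c t = stp h w c u" if "t \<in> {u..<e}" for t
  proof -
    have "of_int ?k * h \<le> t + c \<and> t + c < (of_int ?k + 1) * h"
      using that \<open>of_int ?k * h \<le> u + c \<and> u + c < (of_int ?k + 1) * h\<close> unfolding e_def by auto
    then have "\<lfloor>(t + c)/h\<rfloor> = ?k" using floor_div_eq[OF assms] by blast
    then show ?thesis unfolding stp_def by simp
  qed
  then show ?thesis using ue by blast
qed

lemma isstp_const:
  assumes "h > 0" "isstp h f"
  shows "\<exists>e>u. \<forall>t\<in>{u..<e}. f t = f u"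
  using stp_const[OF assms(1)] assms(2) unfolding isstp_def by blast

lemma mu_pos_interval:
  assumes "isstp h f" "isstp h g" "h > 0" "{a..<b} \<subseteq> {u. f u \<noteq> g u} \<inter> Iv h i" "a < b"
  shows "b - a \<le> mu h f g i"
proof -
  have "measure lborel {a..<b} \<le> mu h f g i"
    unfolding mu_def using D_fmeas[OF assms(1,2)] assms(4)
    by (intro measure_mono_fmeasurable) auto
  then show ?thesis using assms(5) by simp
qed

lemma mu_pos:
  assumes "isstp h f" "isstp h g" "h > 0" "f u \<noteq> g u"
  shows "\<exists>i. 0 < mu h f g i"
proof -
  obtain e1 where e1: "e1 > u" "\<forall>t\<in>{u..<e1}. f t = f u" using isstp_const[OF assms(3,1)] by blast
  obtain e2 where e2: "e2 > u" "\<forall>t\<in>{u..<e2}. g t = g u" using isstp_const[OF assms(3,2)] by blast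
  define i where "i = \<lfloor>u / h\<rfloor>"
  have ui: "of_int i * h \<le> u \<and> u < (of_int i + 1) * h" using floor_div_eq[OF assms(3), of u i] i_def by simp
  define e where "e = min (min e1 e2) ((of_int i + 1) * h)"
  have ue: "u < e" using e1 e2 ui unfolding e_def by auto
  have "{u..<e} \<subseteq> {u. f u \<noteq> g u} \<inter> Iv h i"
  proof
    fix t assume t: "t \<in> {u..<e}"
    have te: "u \<le> t" "t < e" using t by auto
    have "t < e1" "t < e2" "t < (of_int i + 1) * h" using te(2) unfolding e_def by simp_all
    then have "t \<in> {u..<e1}" "t \<in> {u..<e2}" using te(1) by simp_all
    then have "f t = f u" "g t = g u" using e1(2) e2(2) by blast+
    moreover have "t \<in> Iv h i" unfolding Iv_def using ui te(1) \<open>t < (of_int i + 1) * h\<close> by simp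
    ultimately show "t \<in> {u. f u \<noteq> g u} \<inter> Iv h i" using assms(4) by auto
  qed
  then have "e - u \<le> mu h f g i" by (rule mu_pos_interval[OF assms(1-3) _ ue])
  then have "0 < mu h f g i" using ue by linarith
  then show ?thesis by blast
qed

lemma mu_triangle:
  assumes "isstp h x" "isstp h y" "isstp h z"
  shows "mu h x z i \<le> mu h x y i + mu h y z i"
proof -
  have "mu h x z i \<le> measure lborel (({u. x u \<noteq> y u} \<inter> Iv h i) \<union> ({u. y u \<noteq> z u} \<inter> Iv h i))"
  proof -
    have u: "({u. x u \<noteq> y u} \<inter> Iv h i) \<union> ({u. y u \<noteq> z u} \<inter> Iv h i) \<in> fmeasurable lborel"
      using D_fmeas[OF assms(1,2)] D_fmeas[OF assms(2,3)] by (rule fmeasurable.Un)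
    show ?thesis
      unfolding mu_def using D_fmeas[OF assms(1,3)] u
      by (intro measure_mono_fmeasurable) (auto simp: fmeasurable_def)
  qed
  also have "\<dots> \<le> mu h x y i + mu h y z i"
    unfolding mu_def using D_fmeas[OF assms(1,2)] D_fmeas[OF assms(2,3)]
    by (intro measure_Un_le) (auto simp: fmeasurable_def)
  finally show ?thesis .
qed

lemma flowdist_nonneg:
  assumes "h > 0"
  shows "0 \<le> flowdist h x y"
  unfolding flowdist_def
proof (rule infsum_nonneg)
  fix i :: int
  let ?f = "(\<lambda>t. if x t \<noteq> y t then 1 else 0) :: real \<Rightarrow> real"
  have "0 \<le> integral {of_int i * h .. (of_int i + 1) * h} ?f"
  proof (cases "?f integrable_on {of_int i * h .. (of_int i + 1) * h}")
    case True then show ?thesis by (rule integral_nonneg) auto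
  next
    case False then show ?thesis by (simp add: not_integrable_integral)
  qed
  then show "0 \<le> (1 / 4) ^ nat \<bar>i\<bar> * (1 / h * integral {of_int i * h .. (of_int i + 1) * h} ?f)"
    using assms by simp
qed

lemma flowdist_commute: "flowdist h x y = flowdist h y x"
proof -
  have "(\<lambda>t. if x t \<noteq> y t then 1 else 0) = ((\<lambda>t. if y t \<noteq> x t then 1 else 0) :: real \<Rightarrow> real)"
    by (rule ext) auto
  then show ?thesis unfolding flowdist_def by simp
qed

lemma flowdist_self: "flowdist h x x = 0"
  unfolding flowdist_def by simp

lemma flowdist_pos:
  assumes "isstp h f" "isstp h g" "h > 0" "f \<noteq> g"
  shows "0 < flowdist h f g"
proof -
  obtain u where "f u \<noteq> g u" using assms(4) by auto
  then obtain i where i: "0 < mu h f g i" using mu_pos[OF assms(1-3)] by blast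
  have "0 < wt i * (mu h f g i / h)" using i wt_pos[of i] assms(3) by simp
  also have "\<dots> \<le> flowdist h f g" by (rule fd_lower[OF assms(1-3)])
  finally show ?thesis .
qed

lemma flowdist_triangle:
  assumes "isstp h x" "isstp h y" "isstp h z" "h > 0"
  shows "flowdist h x z \<le> flowdist h x y + flowdist h y z"
proof -
  have "flowdist h x z = infsum (\<lambda>i. wt i * (mu h x z i / h)) UNIV" by (rule flowdist_eq[OF assms(1,3)])
  also have "\<dots> \<le> infsum (\<lambda>i. wt i * (mu h x y i / h) + wt i * (mu h y z i / h)) UNIV"
  proof (rule infsum_mono)
    show "(\<lambda>i. wt i * (mu h x z i / h)) summable_on UNIV" by (rule mu_term_summable[OF assms(1,3,4)])
    show "(\<lambda>i. wt i * (mu h x y i / h) + wt i * (mu h y z i / h)) summable_on UNIV"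
      by (intro summable_on_add mu_term_summable assms)
    fix i
    have "mu h x z i / h \<le> mu h x y i / h + mu h y z i / h"
      using mu_triangle[OF assms(1-3), of i] assms(4) divide_right_mono[of "mu h x z i" "mu h x y i + mu h y z i" h]
      by (simp add: add_divide_distrib)
    then show "wt i * (mu h x z i / h) \<le> wt i * (mu h x y i / h) + wt i * (mu h y z i / h)"
      using wt_pos[of i] mult_left_mono[of "mu h x z i / h" "mu h x y i / h + mu h y z i / h" "wt i"]
      by (simp add: distrib_left)
  qed
  also have "\<dots> = flowdist h x y + flowdist h y z"
    using infsum_add[OF mu_term_summable[OF assms(1,2,4)] mu_term_summable[OF assms(2,3,4)]]
      flowdist_eq[OF assms(1,2)] flowdist_eq[OF assms(2,3)] by simp
  finally show ?thesis .
qed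

lemma metric_Delta:
  fixes V :: "'v set"
  assumes "h > 0"
  shows "Metric_space (Delta V E h) (flowdist h)"
proof
  fix x y z :: "real \<Rightarrow> 'v"
  show "0 \<le> flowdist h x y" by (rule flowdist_nonneg[OF assms])
  show "flowdist h x y = flowdist h y x" by (rule flowdist_commute)
  assume xy: "x \<in> Delta V E h" "y \<in> Delta V E h"
  show "flowdist h x y = 0 \<longleftrightarrow> x = y"
  proof
    assume "flowdist h x y = 0"
    then show "x = y" using flowdist_pos[OF Delta_isstp[OF assms xy(1)] Delta_isstp[OF assms xy(2)] assms]
      by fastforce
  next
    assume "x = y" then show "flowdist h x y = 0" by (simp add: flowdist_self)
  qed
  assume "z \<in> Delta V E h"
  then show "flowdist h x z \<le> flowdist h x y + flowdist h y z"
    using xy by (intro flowdist_triangle Delta_isstp assms)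
qed

lemma floor_split:
  fixes a b :: real
  assumes "a \<le> b" "\<lfloor>a\<rfloor> \<noteq> \<lfloor>b\<rfloor>"
  shows "a < of_int \<lfloor>b\<rfloor> \<and> of_int \<lfloor>b\<rfloor> \<le> b"
proof -
  have "\<lfloor>a\<rfloor> \<le> \<lfloor>b\<rfloor>" using assms(1) by (rule floor_mono)
  then have "\<lfloor>a\<rfloor> + 1 \<le> \<lfloor>b\<rfloor>" using assms(2) by simp
  then have "real_of_int \<lfloor>a\<rfloor> + 1 \<le> of_int \<lfloor>b\<rfloor>" by linarith
  moreover have "a < real_of_int \<lfloor>a\<rfloor> + 1" by linarith
  ultimately show ?thesis by linarith
qed

lemma floor_range:
  assumes "h > 0" "u \<in> Iv h i" "s \<in> {0..h}"
  shows "\<lfloor>(u + s)/h\<rfloor> \<in> {i..i+2}"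
proof -
  have u: "of_int i * h \<le> u" "u \<le> (of_int i + 1) * h" using assms(2) unfolding Iv_def by auto
  have "of_int i * h \<le> u + s" "u + s \<le> (of_int i + 2) * h" using u assms(3) by (auto simp: algebra_simps)
  then have "of_int i \<le> (u + s)/h" "(u + s)/h \<le> of_int i + 2"
    using assms(1) by (simp_all add: pos_le_divide_eq pos_divide_le_eq)
  then have "i \<le> \<lfloor>(u + s)/h\<rfloor>" "\<lfloor>(u + s)/h\<rfloor> \<le> i + 2" by linarith+
  then show ?thesis by simp
qed

lemma mu_shift:
  assumes h: "h > 0" and s: "s \<in> {0..h}" and s': "s' \<in> {0..h}"
    and agree: "\<forall>k\<in>{i..i+2}. w k = w' k"
  shows "mu h (stp h w s) (stp h w' s') i \<le> 3 * \<bar>s - s'\<bar>"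
proof -
  define lo where "lo = min s s'"
  define hi where "hi = max s s'"
  have lohi: "lo \<le> hi" "hi - lo = \<bar>s - s'\<bar>" unfolding lo_def hi_def by auto
  define J where "J = (\<lambda>j::int. {of_int (i + j) * h - hi .. of_int (i + j) * h - lo})"
  let ?D = "{u. stp h w s u \<noteq> stp h w' s' u} \<inter> Iv h i"
  have sub: "?D \<subseteq> J 0 \<union> J 1 \<union> J 2"
  proof
    fix u assume u: "u \<in> ?D"
    have ui: "u \<in> Iv h i" using u by auto
    have r1: "\<lfloor>(u + s)/h\<rfloor> \<in> {i..i+2}" by (rule floor_range[OF h ui s])
    have r2: "\<lfloor>(u + s')/h\<rfloor> \<in> {i..i+2}" by (rule floor_range[OF h ui s'])
    have ne: "\<lfloor>(u + s)/h\<rfloor> \<noteq> \<lfloor>(u + s')/h\<rfloor>"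
    proof
      assume eq: "\<lfloor>(u + s)/h\<rfloor> = \<lfloor>(u + s')/h\<rfloor>"
      have "w \<lfloor>(u + s)/h\<rfloor> = w' \<lfloor>(u + s)/h\<rfloor>" using agree r1 by blast
      then have "stp h w s u = stp h w' s' u" unfolding stp_def using eq by simp
      then show False using u by simp
    qed
    have ne2: "\<lfloor>(u + lo)/h\<rfloor> \<noteq> \<lfloor>(u + hi)/h\<rfloor>"
      using ne unfolding lo_def hi_def by (cases "s \<le> s'") (auto simp: min_def max_def)
    have hi_r: "hi \<in> {0..h}" using s s' unfolding hi_def by auto
    have le: "(u + lo)/h \<le> (u + hi)/h" using lohi h by (simp add: divide_right_mono)
    define k where "k = \<lfloor>(u + hi)/h\<rfloor>"
    have k: "(u + lo)/h < of_int k" "of_int k \<le> (u + hi)/h"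
      using floor_split[OF le ne2] unfolding k_def by auto
    have kr: "k \<in> {i..i+2}" unfolding k_def by (rule floor_range[OF h ui hi_r])
    have "u + lo < of_int k * h" "of_int k * h \<le> u + hi"
      using k h by (simp_all add: pos_divide_less_eq pos_le_divide_eq)
    then have uk: "u \<in> J (k - i)" unfolding J_def by simp
    have "k - i = 0 \<or> k - i = 1 \<or> k - i = 2" using kr by auto
    then show "u \<in> J 0 \<union> J 1 \<union> J 2" using uk by auto
  qed
  have Jm: "J j \<in> sets lborel" for j unfolding J_def by simp
  have Jmeas: "measure lborel (J j) = \<bar>s - s'\<bar>" for j unfolding J_def using lohi by simp
  have "mu h (stp h w s) (stp h w' s') i \<le> measure lborel (J 0 \<union> J 1 \<union> J 2)"
  proof -
    have "J 0 \<union> J 1 \<union> J 2 \<in> fmeasurable lborel"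
      unfolding J_def by (intro fmeasurable.Un) (metis cbox_interval fmeasurable_cbox)+
    moreover have "isstp h (stp h w s)" "isstp h (stp h w' s')" unfolding isstp_def by blast+
    ultimately show ?thesis unfolding mu_def using sub D_fmeas[of h "stp h w s" "stp h w' s'" i]
      by (intro measure_mono_fmeasurable) (auto simp: fmeasurable_def)
  qed
  also have "\<dots> \<le> measure lborel (J 0 \<union> J 1) + measure lborel (J 2)"
    using Jm by (intro measure_Un_le) auto
  also have "\<dots> \<le> measure lborel (J 0) + measure lborel (J 1) + measure lborel (J 2)"
    using measure_Un_le[OF Jm Jm, of 0 1] by simp
  also have "\<dots> = 3 * \<bar>s - s'\<bar>" unfolding Jmeas by simp
  finally show ?thesis .
qed

lemma fd_upper:
  assumes h: "h > 0" and s: "s \<in> {0..h}" and s': "s' \<in> {0..h}"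
    and agree: "\<forall>k\<in>{-int N..int N + 2}. w k = w' k"
  shows "flowdist h (stp h w s) (stp h w' s') \<le> 9 * \<bar>s - s'\<bar> / h + 3 * (1/2) ^ N"
proof -
  let ?f = "stp h w s" and ?g = "stp h w' s'"
  have sf: "isstp h ?f" "isstp h ?g" unfolding isstp_def by blast+
  define T where "T = (\<lambda>i. wt i * (mu h ?f ?g i / h))"
  define F where "F = {-int N..int N}"
  have Tsum: "T summable_on A" for A unfolding T_def by (rule mu_term_summable[OF sf h])
  have Tnn: "0 \<le> T i" for i unfolding T_def using wt_pos[of i] mu_nonneg[of h ?f ?g i] h by simp
  have "flowdist h ?f ?g = infsum T (F \<union> (- F))"
    unfolding T_def by (simp add: flowdist_eq[OF sf])
  also have "\<dots> = infsum T F + infsum T (- F)"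
    by (rule infsum_Un_disjoint[OF Tsum Tsum]) auto
  also have "infsum T F \<le> 9 * \<bar>s - s'\<bar> / h"
  proof -
    have "infsum T F = sum T F" unfolding F_def by simp
    also have "\<dots> \<le> sum (\<lambda>i. wt i * (3 * \<bar>s - s'\<bar> / h)) F"
    proof (rule sum_mono)
      fix i assume "i \<in> F"
      then have "\<forall>k\<in>{i..i+2}. w k = w' k" using agree unfolding F_def by auto
      then have "mu h ?f ?g i \<le> 3 * \<bar>s - s'\<bar>" by (rule mu_shift[OF h s s'])
      then have "mu h ?f ?g i / h \<le> 3 * \<bar>s - s'\<bar> / h" using h by (simp add: divide_right_mono)
      then show "T i \<le> wt i * (3 * \<bar>s - s'\<bar> / h)"
        unfolding T_def by (rule mult_left_mono) (use wt_pos[of i] in simp)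
    qed
    also have "\<dots> = sum wt F * (3 * \<bar>s - s'\<bar> / h)" by (rule sum_distrib_right[symmetric])
    also have "\<dots> \<le> 3 * (3 * \<bar>s - s'\<bar> / h)"
    proof (rule mult_right_mono)
      show "sum wt F \<le> 3" unfolding wt_def F_def by (rule geo_fin) auto
      show "0 \<le> 3 * \<bar>s - s'\<bar> / h" using h by simp
    qed
    finally show ?thesis by simp
  qed
  moreover have "infsum T (- F) \<le> 3 * (1/2) ^ N"
  proof -
    have "infsum T (- F) \<le> infsum (\<lambda>i. (1/2) ^ N * ((1/2::real) ^ nat \<bar>i\<bar>)) (- F)"
    proof (rule infsum_mono[OF Tsum])
      show "(\<lambda>i. (1/2) ^ N * ((1/2::real) ^ nat \<bar>i\<bar>)) summable_on - F"
        by (intro summable_on_cmult_right geo_summable) auto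
      fix i assume "i \<in> - F"
      then have nN: "N \<le> nat \<bar>i\<bar>" unfolding F_def by auto
      have "T i \<le> wt i"
      proof -
        have "mu h ?f ?g i / h \<le> 1" using mu_le[OF sf h, of i] h by simp
        then show ?thesis unfolding T_def using mult_left_le[of "mu h ?f ?g i / h" "wt i"] wt_pos[of i] by simp
      qed
      also have "wt i = (1/2) ^ nat \<bar>i\<bar> * (1/2::real) ^ nat \<bar>i\<bar>"
        unfolding wt_def by (simp add: power_mult_distrib[symmetric])
      also have "\<dots> \<le> (1/2) ^ N * (1/2::real) ^ nat \<bar>i\<bar>"
        using nN by (intro mult_right_mono power_decreasing) auto
      finally show "T i \<le> (1/2) ^ N * ((1/2::real) ^ nat \<bar>i\<bar>)" .
    qed
    also have "\<dots> = (1/2) ^ N * infsum (\<lambda>i. (1/2::real) ^ nat \<bar>i\<bar>) (- F)"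
      by (rule infsum_cmult_right')
    also have "\<dots> \<le> (1/2) ^ N * 3"
      by (intro mult_left_mono geo_summable) auto
    finally show ?thesis by simp
  qed
  ultimately show ?thesis by linarith
qed

definition PT :: "'v set \<Rightarrow> (int \<Rightarrow> 'v) topology" where
  "PT C = product_topology (\<lambda>_::int. discrete_topology C) UNIV"

definition XT :: "'v set \<Rightarrow> ('v \<times> 'v) set \<Rightarrow> real \<Rightarrow> ((int \<Rightarrow> 'v) \<times> real) topology" where
  "XT C E h = prod_topology (subtopology (PT C) (Omega C E)) (top_of_set {0..h})"

lemma topspace_PT: "topspace (PT C) = {w. \<forall>i. w i \<in> C}"
  unfolding PT_def by (auto simp: PiE_iff)

lemma Omega_sub_PT: "Omega C E \<subseteq> topspace (PT C)"
  unfolding topspace_PT Omega_def by auto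

lemma cyl_open:
  assumes "finite K"
  shows "openin (PT C) {w \<in> topspace (PT C). \<forall>k\<in>K. w k = a k}"
  using assms
proof (induction K rule: finite_induct)
  case empty
  then show ?case by simp
next
  case (insert k0 K)
  have "continuous_map (PT C) (discrete_topology C) (\<lambda>x. x k0)"
    unfolding PT_def by (rule continuous_map_product_projection) simp
  then have o1: "openin (PT C) {x \<in> topspace (PT C). x k0 \<in> {a k0} \<inter> C}"
    by (rule openin_continuous_map_preimage) simp
  have eq: "{w \<in> topspace (PT C). \<forall>k\<in>insert k0 K. w k = a k}
      = {x \<in> topspace (PT C). x k0 \<in> {a k0} \<inter> C} \<inter> {w \<in> topspace (PT C). \<forall>k\<in>K. w k = a k}"
    unfolding topspace_PT by auto
  show ?case unfolding eq using o1 insert.IH by (rule openin_Int)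
qed

lemma Omega_closed: "closedin (PT C) (Omega C E)"
  unfolding closedin_def
proof (intro conjI Omega_sub_PT)
  show "openin (PT C) (topspace (PT C) - Omega C E)"
  proof (subst openin_subopen, intro ballI)
    fix w assume w: "w \<in> topspace (PT C) - Omega C E"
    then obtain i where i: "(w i, w (i+1)) \<notin> E" unfolding topspace_PT Omega_def by auto
    let ?T = "{w' \<in> topspace (PT C). \<forall>k\<in>{i, i+1}. w' k = w k}"
    have "openin (PT C) ?T" by (rule cyl_open) simp
    moreover have "w \<in> ?T" using w by auto
    moreover have "?T \<subseteq> topspace (PT C) - Omega C E"
    proof
      fix w' assume "w' \<in> ?T"
      then have "w' \<in> topspace (PT C)" "w' i = w i" "w' (i+1) = w (i+1)" by auto
      then have "(w' i, w' (i+1)) \<notin> E" using i by simp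
      then have "w' \<notin> Omega C E" unfolding Omega_def by blast
      then show "w' \<in> topspace (PT C) - Omega C E" using \<open>w' \<in> topspace (PT C)\<close> by blast
    qed
    ultimately show "\<exists>T. openin (PT C) T \<and> w \<in> T \<and> T \<subseteq> topspace (PT C) - Omega C E" by blast
  qed
qed

lemma compact_XT:
  assumes "finite C"
  shows "compact_space (XT C E h)"
proof -
  have "compact_space (PT C)"
    unfolding PT_def compact_space_product_topology using assms
    by (simp add: compact_space_discrete_topology)
  then have "compactin (PT C) (Omega C E)" using Omega_closed by (rule closedin_compact_space)
  then have c1: "compact_space (subtopology (PT C) (Omega C E))" by (rule compact_space_subtopology)
  have "compactin euclidean {0..h}" by simp
  then have c2: "compact_space (top_of_set {0..h})" by (rule compact_space_subtopology)
  show ?thesis unfolding XT_def compact_space_prod_topology using c1 c2 by simp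
qed

lemma stp_in_Delta:
  assumes "h > 0" "w \<in> Omega V E"
  shows "stp h w c \<in> Delta V E h"
  using Delta_rep[OF assms(1)] assms(2) by blast

lemma Omega_mono: "C \<subseteq> V \<Longrightarrow> Omega C E \<subseteq> Omega V E"
  unfolding Omega_def by auto

lemma cont_F:
  fixes V :: "'v set"
  assumes h: "h > 0" and CV: "C \<subseteq> V"
  shows "continuous_map (XT C E h) (flowtop V E h) (\<lambda>p. stp h (fst p) (snd p))"
proof -
  interpret M: Metric_space "Delta V E h" "flowdist h" by (rule metric_Delta[OF h])
  show ?thesis unfolding flowtop_def M.continuous_map_to_metric
  proof (intro ballI allI impI)
    fix x :: "(int \<Rightarrow> 'v) \<times> real" and \<epsilon> :: real
    assume x: "x \<in> topspace (XT C E h)" and e: "0 < \<epsilon>"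
    obtain w s where xws: "x = (w, s)" by (cases x)
    have w: "w \<in> Omega C E" and s: "s \<in> {0..h}" using x unfolding xws XT_def by auto
    obtain N where N: "(1/2::real) ^ N < \<epsilon> / 6" using real_arch_pow_inv[of "\<epsilon>/6" "1/2::real"] e by auto
    define \<delta> where "\<delta> = \<epsilon> * h / 18"
    have dpos: "0 < \<delta>" unfolding \<delta>_def using e h by simp
    define K where "K = {-int N..int N + 2}"
    define A where "A = {w' \<in> topspace (PT C). \<forall>k\<in>K. w' k = w k}"
    define U where "U = (A \<inter> Omega C E) \<times> ({0..h} \<inter> ball s \<delta>)"
    have oA: "openin (PT C) A" unfolding A_def K_def by (rule cyl_open) simp
    have "openin (subtopology (PT C) (Omega C E)) (A \<inter> Omega C E)"
      unfolding openin_subtopology using oA by blast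
    moreover have "openin (top_of_set {0..h}) ({0..h} \<inter> ball s \<delta>)" by (rule openin_open_Int) simp
    ultimately have oU: "openin (XT C E h) U" unfolding U_def XT_def openin_prod_Times_iff by blast
    have xU: "x \<in> U" unfolding U_def xws A_def using w s dpos Omega_sub_PT by auto
    have "\<forall>y\<in>U. stp h (fst y) (snd y) \<in> M.mball (stp h (fst x) (snd x)) \<epsilon>"
    proof
      fix y assume y: "y \<in> U"
      obtain w' s' where yws: "y = (w', s')" by (cases y)
      have w': "w' \<in> Omega C E" and s': "s' \<in> {0..h}" and ss: "\<bar>s - s'\<bar> < \<delta>"
        and ag: "\<forall>k\<in>K. w' k = w k"
        using y unfolding yws U_def A_def by (auto simp: dist_real_def)
      have ag2: "\<forall>k\<in>{-int N..int N + 2}. w k = w' k" using ag unfolding K_def by auto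
      have "flowdist h (stp h w s) (stp h w' s') \<le> 9 * \<bar>s - s'\<bar> / h + 3 * (1/2) ^ N"
        by (rule fd_upper[OF h s s' ag2])
      also have "9 * \<bar>s - s'\<bar> / h < \<epsilon> / 2"
      proof -
        have "9 * \<bar>s - s'\<bar> < 9 * \<delta>" using ss by simp
        then have "9 * \<bar>s - s'\<bar> < \<epsilon> * h / 2" unfolding \<delta>_def by simp
        then show ?thesis using h by (simp add: pos_divide_less_eq)
      qed
      then have "9 * \<bar>s - s'\<bar> / h + 3 * (1/2) ^ N < \<epsilon>" using N by linarith
      finally have d: "flowdist h (stp h w s) (stp h w' s') < \<epsilon>" .
      have "stp h w s \<in> Delta V E h" "stp h w' s' \<in> Delta V E h"
        using stp_in_Delta[OF h] Omega_mono[OF CV] w w' by blast+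
      then show "stp h (fst y) (snd y) \<in> M.mball (stp h (fst x) (snd x)) \<epsilon>"
        using d unfolding xws yws by simp
    qed
    then show "\<exists>U. openin (XT C E h) U \<and> x \<in> U \<and> (\<forall>y\<in>U. stp h (fst y) (snd y) \<in> M.mball (stp h (fst x) (snd x)) \<epsilon>)"
      using oU xU by blast
  qed
qed

lemma image_F:
  fixes V :: "'v set"
  assumes h: "h > 0" and CV: "C \<subseteq> V"
  shows "(\<lambda>p. stp h (fst p) (snd p)) ` (Omega C E \<times> {0..h}) = lift V E h C"
proof
  show "(\<lambda>p. stp h (fst p) (snd p)) ` (Omega C E \<times> {0..h}) \<subseteq> lift V E h C"
  proof
    fix f assume "f \<in> (\<lambda>p. stp h (fst p) (snd p)) ` (Omega C E \<times> {0..h})"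
    then obtain w s where w: "w \<in> Omega C E" and f: "f = stp h w s" by auto
    have "f \<in> Delta V E h" unfolding f using stp_in_Delta[OF h] Omega_mono[OF CV] w by blast
    moreover have "f t \<in> C" for t unfolding f stp_def using w unfolding Omega_def by auto
    ultimately show "f \<in> lift V E h C" unfolding lift_def by auto
  qed
next
  show "lift V E h C \<subseteq> (\<lambda>p. stp h (fst p) (snd p)) ` (Omega C E \<times> {0..h})"
  proof
    fix f assume f: "f \<in> lift V E h C"
    then obtain w c where w: "w \<in> Omega V E" and fw: "f = stp h w c"
      unfolding lift_def using Delta_rep[OF h] by blast
    have wC: "w i \<in> C" for i
    proof -
      have "f (of_int i * h - c) = w i" unfolding fw stp_def using h by simp
      moreover have "f (of_int i * h - c) \<in> C" using f unfolding lift_def by blast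
      ultimately show ?thesis by simp
    qed
    define m where "m = \<lfloor>c / h\<rfloor>"
    define s where "s = c - of_int m * h"
    define w' where "w' = (\<lambda>i. w (i + m))"
    have mc: "of_int m * h \<le> c \<and> c < (of_int m + 1) * h" using floor_div_eq[OF h, of c m] m_def by simp
    have s: "s \<in> {0..h}" using mc unfolding s_def by (auto simp: algebra_simps)
    have w': "w' \<in> Omega C E" unfolding Omega_def w'_def
    proof (intro CollectI allI conjI)
      fix i
      show "w (i + m) \<in> C" by (rule wC)
      have "(w (i + m), w (i + m + 1)) \<in> E" using w unfolding Omega_def by blast
      then show "(w (i + m), w (i + 1 + m)) \<in> E" by (simp add: algebra_simps)
    qed
    have "stp h w' s = f"
    proof
      fix u
      have "(u + s) / h + of_int m = (u + c) / h" unfolding s_def using h by (simp add: field_simps)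
      then have "\<lfloor>(u + s) / h\<rfloor> + m = \<lfloor>(u + c) / h\<rfloor>"
        by (metis floor_add_int)
      then show "stp h w' s u = f u" unfolding fw stp_def w'_def by simp
    qed
    then show "f \<in> (\<lambda>p. stp h (fst p) (snd p)) ` (Omega C E \<times> {0..h})"
      using w' s by force
  qed
qed

lemma compact_lift:
  fixes V :: "'v set"
  assumes h: "h > 0" and CV: "C \<subseteq> V" and fin: "finite V"
  shows "compactin (flowtop V E h) (lift V E h C)"
proof -
  have "compactin (XT C E h) (topspace (XT C E h))"
    using compact_XT[of C E h] finite_subset[OF CV fin] unfolding compact_space_def by blast
  then have "compactin (flowtop V E h) ((\<lambda>p. stp h (fst p) (snd p)) ` topspace (XT C E h))"
    using cont_F[OF h CV] by (rule image_compactin)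
  moreover have "topspace (XT C E h) = Omega C E \<times> {0..h}"
    unfolding XT_def using Omega_sub_PT by auto
  ultimately show ?thesis using image_F[OF h CV] by simp
qed

definition Rp :: "(int \<Rightarrow> 'v) \<Rightarrow> 'v set" where
  "Rp w = {v. \<forall>T. \<exists>j\<ge>T. w j = v}"

lemma path_rtrancl:
  assumes "w \<in> Omega V E"
  shows "(w i, w (i + int n)) \<in> E\<^sup>*"
proof (induction n)
  case 0 then show ?case by simp
next
  case (Suc n)
  have "(w (i + int n), w (i + int n + 1)) \<in> E" using assms unfolding Omega_def by blast
  then have "(w i, w (i + int n + 1)) \<in> E\<^sup>*" using Suc by (rule rtrancl_into_rtrancl[rotated])
  moreover have "i + int n + 1 = i + int (Suc n)" by simp
  ultimately show ?case by metis
qed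

lemma path_rtrancl':
  assumes "w \<in> Omega V E" "i \<le> j"
  shows "(w i, w j) \<in> E\<^sup>*"
proof -
  have "j = i + int (nat (j - i))" using assms(2) by simp
  then show ?thesis using path_rtrancl[OF assms(1), of i "nat (j - i)"] by metis
qed

lemma path_restr:
  assumes "w \<in> Omega V E" "\<forall>k\<ge>a. w k \<in> R" "a \<ge> T"
  shows "(w a, w (a + 1 + int n)) \<in> (E \<inter> R \<times> R)\<^sup>+"
proof (induction n)
  case 0
  have "(w a, w (a + 1)) \<in> E" using assms(1) unfolding Omega_def by blast
  moreover have "w a \<in> R" "w (a + 1) \<in> R" using assms(2) by auto
  ultimately show ?case by auto
next
  case (Suc n)
  have "(w (a + 1 + int n), w (a + 1 + int n + 1)) \<in> E" using assms(1) unfolding Omega_def by blast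
  moreover have "w (a + 1 + int n) \<in> R" "w (a + 1 + int n + 1) \<in> R" using assms(2) by auto
  ultimately have "(w (a + 1 + int n), w (a + 1 + int (Suc n))) \<in> E \<inter> R \<times> R" by (simp add: add.assoc)
  with Suc show ?case by (rule trancl_into_trancl)
qed

lemma Rp_props:
  assumes fin: "finite V" and w: "w \<in> Omega V E"
  shows "\<exists>T0. (\<forall>i\<ge>T0. w i \<in> Rp w)" "Rp w \<noteq> {}" "strongly_connected_set E (Rp w)"
proof -
  have "\<forall>v\<in>V - Rp w. \<exists>T. \<forall>j\<ge>T. w j \<noteq> v" unfolding Rp_def by auto
  then obtain Tf where Tf: "\<And>v. v \<in> V - Rp w \<Longrightarrow> \<forall>j\<ge>Tf v. w j \<noteq> v" by metis
  define T0 where "T0 = Max (insert 0 (Tf ` (V - Rp w)))"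
  have fT: "finite (insert 0 (Tf ` (V - Rp w)))" using fin by simp
  have T0: "\<forall>i\<ge>T0. w i \<in> Rp w"
  proof (intro allI impI)
    fix i assume i: "T0 \<le> i"
    show "w i \<in> Rp w"
    proof (rule ccontr)
      assume nR: "w i \<notin> Rp w"
      have "w i \<in> V" using w unfolding Omega_def by blast
      then have v: "w i \<in> V - Rp w" using nR by simp
      have "Tf (w i) \<le> T0" unfolding T0_def using fT v by (intro Max_ge) auto
      then have "Tf (w i) \<le> i" using i by simp
      then show False using Tf[OF v] by blast
    qed
  qed
  then show "\<exists>T0. (\<forall>i\<ge>T0. w i \<in> Rp w)" by blast
  show ne: "Rp w \<noteq> {}" using T0 by blast
  show "strongly_connected_set E (Rp w)"
    unfolding strongly_connected_set_def
  proof (intro conjI ballI ne)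
    fix u v assume u: "u \<in> Rp w" and v: "v \<in> Rp w"
    obtain a where a: "a \<ge> T0" "w a = u" using u unfolding Rp_def by blast
    obtain b where b: "b \<ge> a + 1" "w b = v" using v unfolding Rp_def by blast
    have RR: "\<forall>k\<ge>a. w k \<in> Rp w" using T0 a(1) by auto
    have "b = a + 1 + int (nat (b - a - 1))" using b(1) by simp
    then show "(u, v) \<in> (E \<inter> Rp w \<times> Rp w)\<^sup>+"
      using path_restr[OF w RR a(1), of "nat (b - a - 1)"] a(2) b(2) by metis
  qed
qed

definition Rm :: "(int \<Rightarrow> 'v) \<Rightarrow> 'v set" where
  "Rm w = {v. \<forall>T. \<exists>j\<le>T. w j = v}"

lemma Rm_props:
  assumes fin: "finite V" and w: "w \<in> Omega V E"
  shows "Rm w \<noteq> {}" "strongly_connected_set E (Rm w)"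
proof -
  define w' where "w' = (\<lambda>i. w (- i))"
  have w': "w' \<in> Omega V (E\<inverse>)" unfolding Omega_def w'_def
  proof (intro CollectI allI conjI)
    fix i
    show "w (- i) \<in> V" using w unfolding Omega_def by blast
    have "(w (- i - 1), w (- i - 1 + 1)) \<in> E" using w unfolding Omega_def by blast
    then show "(w (- i), w (- (i + 1))) \<in> E\<inverse>" by simp
  qed
  have eq: "Rp w' = Rm w"
  proof -
    have "(\<forall>T. \<exists>j\<ge>T. w (- j) = v) \<longleftrightarrow> (\<forall>T. \<exists>j\<le>T. w j = v)" for v
    proof
      assume L: "\<forall>T. \<exists>j\<ge>T. w (- j) = v"
      show "\<forall>T. \<exists>j\<le>T. w j = v"
      proof
        fix T obtain j where "j \<ge> - T" "w (- j) = v" using L by blast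
        then show "\<exists>j\<le>T. w j = v" by (intro exI[of _ "- j"]) auto
      qed
    next
      assume R: "\<forall>T. \<exists>j\<le>T. w j = v"
      show "\<forall>T. \<exists>j\<ge>T. w (- j) = v"
      proof
        fix T obtain j where "j \<le> - T" "w j = v" using R by blast
        then show "\<exists>j\<ge>T. w (- j) = v" by (intro exI[of _ "- j"]) auto
      qed
    qed
    then show ?thesis unfolding Rp_def Rm_def w'_def by simp
  qed
  show "Rm w \<noteq> {}" using Rp_props(2)[OF fin w'] eq by simp
  show "strongly_connected_set E (Rm w)" using Rp_props(3)[OF fin w'] eq sc_converse by metis
qed

lemma psi_stp: "psi t (stp h w c) = stp h w (c + t)"
  unfolding psi_def stp_def by (rule ext) (simp add: algebra_simps)

lemma psi_Delta:
  assumes h: "h > 0" and f: "f \<in> Delta V E h"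
  shows "psi t f \<in> Delta V E h"
proof -
  obtain w c where w: "w \<in> Omega V E" and fw: "f = stp h w c" using f Delta_rep[OF h] by blast
  show ?thesis unfolding fw psi_stp using stp_in_Delta[OF h w] .
qed

lemma lift_invariant:
  assumes h: "h > 0"
  shows "invariant (lift V E h C)"
  unfolding invariant_def lift_def
proof (intro allI ballI)
  fix t and x assume x: "x \<in> {f \<in> Delta V E h. \<forall>t. f t \<in> C}"
  have "psi t x \<in> Delta V E h" using psi_Delta[OF h] x by blast
  moreover have "\<forall>s. psi t x s \<in> C" using x unfolding psi_def by auto
  ultimately show "psi t x \<in> {f \<in> Delta V E h. \<forall>t. f t \<in> C}" by blast
qed

lemma Delta_values:
  assumes h: "h > 0" and f: "f \<in> Delta V E h"
  shows "f t \<in> V"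
proof -
  obtain w c where w: "w \<in> Omega V E" and fw: "f = stp h w c" using f Delta_rep[OF h] by blast
  show ?thesis unfolding fw stp_def using w unfolding Omega_def by blast
qed

lemma lift_V: "h > 0 \<Longrightarrow> lift V E h V = Delta V E h"
  unfolding lift_def using Delta_values by blast

lemma close_agree:
  assumes h: "h > 0" and y: "isstp h y"
  shows "\<exists>\<epsilon>>0. \<forall>t. flowdist h (stp h w (c + t)) y < \<epsilon> \<longrightarrow>
            (\<exists>t'. u \<le> t' \<and> t' < u + h \<and> y u = w \<lfloor>(t' + (c + t))/h\<rfloor>)"
proof -
  obtain e1 where e1: "e1 > u" "\<forall>t\<in>{u..<e1}. y t = y u" using isstp_const[OF h y] by blast
  define i where "i = \<lfloor>u / h\<rfloor>"
  have ui: "of_int i * h \<le> u \<and> u < (of_int i + 1) * h" using floor_div_eq[OF h, of u i] i_def by simp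
  define e where "e = min e1 ((of_int i + 1) * h)"
  have ue: "u < e" using e1 ui unfolding e_def by simp
  have "(of_int i + 1) * h \<le> u + h" using ui by (simp add: algebra_simps)
  then have eu: "e \<le> u + h" unfolding e_def by linarith
  define \<epsilon> where "\<epsilon> = wt i * ((e - u) / h)"
  have epos: "0 < \<epsilon>" unfolding \<epsilon>_def using wt_pos[of i] ue h by simp
  have "\<forall>t. flowdist h (stp h w (c + t)) y < \<epsilon> \<longrightarrow>
            (\<exists>t'. u \<le> t' \<and> t' < u + h \<and> y u = w \<lfloor>(t' + (c + t))/h\<rfloor>)"
  proof (intro allI impI)
    fix t assume d: "flowdist h (stp h w (c + t)) y < \<epsilon>"
    let ?f = "stp h w (c + t)"
    have sf: "isstp h ?f" unfolding isstp_def by blast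
    show "\<exists>t'. u \<le> t' \<and> t' < u + h \<and> y u = w \<lfloor>(t' + (c + t))/h\<rfloor>"
    proof (rule ccontr)
      assume neg: "\<not> (\<exists>t'. u \<le> t' \<and> t' < u + h \<and> y u = w \<lfloor>(t' + (c + t))/h\<rfloor>)"
      have sub: "{u..<e} \<subseteq> {s. ?f s \<noteq> y s} \<inter> Iv h i"
      proof
        fix t' assume t': "t' \<in> {u..<e}"
        have te: "u \<le> t'" "t' < e" using t' by auto
        have "t' < e1" "t' < (of_int i + 1) * h" using te(2) unfolding e_def by simp_all
        then have "t' \<in> {u..<e1}" using te(1) by simp
        then have yt: "y t' = y u" using e1(2) by blast
        have "?f t' \<noteq> y t'"
        proof
          assume "?f t' = y t'"
          then have "y u = w \<lfloor>(t' + (c + t))/h\<rfloor>" using yt unfolding stp_def by simp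
          moreover have "t' < u + h" using te(2) eu by simp
          ultimately show False using neg te(1) by blast
        qed
        moreover have "t' \<in> Iv h i" unfolding Iv_def using ui te(1) \<open>t' < (of_int i + 1) * h\<close> by simp
        ultimately show "t' \<in> {s. ?f s \<noteq> y s} \<inter> Iv h i" by simp
      qed
      have "e - u \<le> mu h ?f y i" by (rule mu_pos_interval[OF sf y h sub ue])
      then have "(e - u) / h \<le> mu h ?f y i / h" using h by (simp add: divide_right_mono)
      then have "\<epsilon> \<le> wt i * (mu h ?f y i / h)" unfolding \<epsilon>_def
        by (rule mult_left_mono) (use wt_pos[of i] in simp)
      also have "\<dots> \<le> flowdist h ?f y" by (rule fd_lower[OF sf y h])
      finally show False using d by simp
    qed
  qed
  then show ?thesis using epos by blast
qed

lemma omega_Rp: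
  fixes V :: "'v set"
  assumes h: "h > 0" and y: "y \<in> omega_lim V E h (stp h w c)"
  shows "y \<in> Delta V E h" "y u \<in> Rp w"
proof -
  interpret M: Metric_space "Delta V E h" "flowdist h" by (rule metric_Delta[OF h])
  obtain tk where tk: "filterlim tk at_top sequentially"
    and lim: "limitin (flowtop V E h) (\<lambda>k. psi (tk k) (stp h w c)) y sequentially"
    using y unfolding omega_lim_def by blast
  have yD: "y \<in> Delta V E h"
    and ev: "\<And>\<epsilon>. \<epsilon> > 0 \<Longrightarrow> eventually (\<lambda>k. psi (tk k) (stp h w c) \<in> Delta V E h \<and>
                 flowdist h (psi (tk k) (stp h w c)) y < \<epsilon>) sequentially"
    using lim unfolding flowtop_def M.limitin_metric by auto
  show "y \<in> Delta V E h" by (rule yD)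
  have ys: "isstp h y" by (rule Delta_isstp[OF h yD])
  obtain \<epsilon> where e: "\<epsilon> > 0" and agree: "\<forall>t. flowdist h (stp h w (c + t)) y < \<epsilon> \<longrightarrow>
            (\<exists>t'. u \<le> t' \<and> t' < u + h \<and> y u = w \<lfloor>(t' + (c + t))/h\<rfloor>)"
    using close_agree[OF h ys, of w c u] by blast
  show "y u \<in> Rp w" unfolding Rp_def
  proof (intro CollectI allI)
    fix T :: int
    have ev2: "eventually (\<lambda>k. of_int T * h - u - c \<le> tk k) sequentially"
      using tk unfolding filterlim_at_top by blast
    obtain k where k1: "flowdist h (psi (tk k) (stp h w c)) y < \<epsilon>" and k2: "of_int T * h - u - c \<le> tk k"
      using eventually_happens'[OF _ eventually_conj[OF ev[OF e] ev2]] by auto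
    obtain t' where t': "u \<le> t'" "y u = w \<lfloor>(t' + (c + tk k))/h\<rfloor>"
      using agree k1 unfolding psi_stp by blast
    have "of_int T * h \<le> t' + (c + tk k)" using t'(1) k2 by simp
    then have "of_int T \<le> (t' + (c + tk k))/h" using h by (simp add: pos_le_divide_eq)
    then have "T \<le> \<lfloor>(t' + (c + tk k))/h\<rfloor>" by linarith
    then show "\<exists>j\<ge>T. w j = y u" using t'(2) by metis
  qed
qed

lemma alpha_Rm:
  fixes V :: "'v set"
  assumes h: "h > 0" and y: "y \<in> alpha_lim V E h (stp h w c)"
  shows "y \<in> Delta V E h" "y u \<in> Rm w"
proof -
  interpret M: Metric_space "Delta V E h" "flowdist h" by (rule metric_Delta[OF h])
  obtain tk where tk: "filterlim tk at_bot sequentially"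
    and lim: "limitin (flowtop V E h) (\<lambda>k. psi (tk k) (stp h w c)) y sequentially"
    using y unfolding alpha_lim_def by blast
  have yD: "y \<in> Delta V E h"
    and ev: "\<And>\<epsilon>. \<epsilon> > 0 \<Longrightarrow> eventually (\<lambda>k. psi (tk k) (stp h w c) \<in> Delta V E h \<and>
                 flowdist h (psi (tk k) (stp h w c)) y < \<epsilon>) sequentially"
    using lim unfolding flowtop_def M.limitin_metric by auto
  show "y \<in> Delta V E h" by (rule yD)
  have ys: "isstp h y" by (rule Delta_isstp[OF h yD])
  obtain \<epsilon> where e: "\<epsilon> > 0" and agree: "\<forall>t. flowdist h (stp h w (c + t)) y < \<epsilon> \<longrightarrow>
            (\<exists>t'. u \<le> t' \<and> t' < u + h \<and> y u = w \<lfloor>(t' + (c + t))/h\<rfloor>)"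
    using close_agree[OF h ys, of w c u] by blast
  show "y u \<in> Rm w" unfolding Rm_def
  proof (intro CollectI allI)
    fix T :: int
    have ev2: "eventually (\<lambda>k. tk k \<le> of_int T * h - u - h - c) sequentially"
      using tk unfolding filterlim_at_bot by blast
    obtain k where k1: "flowdist h (psi (tk k) (stp h w c)) y < \<epsilon>" and k2: "tk k \<le> of_int T * h - u - h - c"
      using eventually_happens'[OF _ eventually_conj[OF ev[OF e] ev2]] by auto
    obtain t' where t': "t' < u + h" "y u = w \<lfloor>(t' + (c + tk k))/h\<rfloor>"
      using agree k1 unfolding psi_stp by blast
    have "t' + (c + tk k) < of_int T * h" using t'(1) k2 by simp
    then have "(t' + (c + tk k))/h < of_int T" using h by (simp add: pos_divide_less_eq)
    then have "\<lfloor>(t' + (c + tk k))/h\<rfloor> \<le> T" by linarith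
    then show "\<exists>j\<le>T. w j = y u" using t'(2) by metis
  qed
qed

lemma lim_ne:
  fixes V :: "'v set"
  assumes h: "h > 0" and fin: "finite V" and x: "x \<in> Delta V E h"
  shows "omega_lim V E h x \<noteq> {}" "alpha_lim V E h x \<noteq> {}"
proof -
  interpret M: Metric_space "Delta V E h" "flowdist h" by (rule metric_Delta[OF h])
  have cpt: "compactin M.mtopology (Delta V E h)"
    using compact_lift[OF h order_refl fin, of E] unfolding flowtop_def lift_V[OF h, of V E] .
  have sq: "\<forall>\<sigma>::nat \<Rightarrow> real \<Rightarrow> 'v. range \<sigma> \<subseteq> Delta V E h \<longrightarrow>
      (\<exists>l r. l \<in> Delta V E h \<and> strict_mono r \<and> limitin M.mtopology (\<sigma> \<circ> r) l sequentially)"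
    using cpt unfolding M.compactin_sequentially by blast
  have "range (\<lambda>k. psi (real k) x) \<subseteq> Delta V E h" using psi_Delta[OF h x] by blast
  then obtain l r where r: "strict_mono r" and lim: "limitin M.mtopology ((\<lambda>k. psi (real k) x) \<circ> r) l sequentially"
    using sq by blast
  have "filterlim (\<lambda>k. real (r k)) at_top sequentially"
    using filterlim_compose[OF filterlim_real_sequentially filterlim_subseq[OF r]] .
  moreover have "limitin (flowtop V E h) (\<lambda>k. psi (real (r k)) x) l sequentially"
    using lim unfolding flowtop_def comp_def .
  ultimately have "l \<in> omega_lim V E h x" unfolding omega_lim_def by blast
  then show "omega_lim V E h x \<noteq> {}" by blast
  have "range (\<lambda>k. psi (- real k) x) \<subseteq> Delta V E h" using psi_Delta[OF h x] by blast
  then obtain l' r' where r': "strict_mono r'" and lim': "limitin M.mtopology ((\<lambda>k. psi (- real k) x) \<circ> r') l' sequentially"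
    using sq by blast
  have "filterlim (\<lambda>k. real (r' k)) at_top sequentially"
    using filterlim_compose[OF filterlim_real_sequentially filterlim_subseq[OF r']] .
  then have "filterlim (\<lambda>k. - real (r' k)) at_bot sequentially"
    using filterlim_uminus_at_top[of "\<lambda>k. real (r' k)" sequentially] by simp
  moreover have "limitin (flowtop V E h) (\<lambda>k. psi (- real (r' k)) x) l' sequentially"
    using lim' unfolding flowtop_def comp_def .
  ultimately have "l' \<in> alpha_lim V E h x" unfolding alpha_lim_def by blast
  then show "alpha_lim V E h x \<noteq> {}" by blast
qed

lemma lift_isolated:
  fixes V :: "'v set"
  assumes h: "h > 0"
  shows "isolated V E h (lift V E h C)"
proof -
  interpret M: Metric_space "Delta V E h" "flowdist h" by (rule metric_Delta[OF h])
  define N where "N = (\<Union>k\<in>lift V E h C. M.mball k 1)"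
  have NM: "N \<subseteq> Delta V E h" unfolding N_def using M.mball_subset_mspace by blast
  have oN: "openin (flowtop V E h) N" unfolding N_def flowtop_def by blast
  have KN: "lift V E h C \<subseteq> N"
  proof
    fix k assume k: "k \<in> lift V E h C"
    then have "k \<in> Delta V E h" unfolding lift_def by blast
    then have "k \<in> M.mball k 1" by simp
    then show "k \<in> N" unfolding N_def using k by blast
  qed
  have orbit: "x \<in> lift V E h C" if x: "x \<in> Delta V E h" and all: "\<forall>t. psi t x \<in> N" for x
  proof -
    obtain w c where w: "w \<in> Omega V E" and xw: "x = stp h w c" using x Delta_rep[OF h] by blast
    have "x t0 \<in> C" for t0
    proof -
      define n where "n = \<lfloor>(t0 + c)/h\<rfloor>"
      define t1 where "t1 = of_int n * h - c"
      let ?f = "psi t1 x"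
      have f: "?f = stp h w (of_int n * h)" unfolding xw psi_stp t1_def by simp
      obtain k where k: "k \<in> lift V E h C" and kf: "?f \<in> M.mball k 1" using all unfolding N_def by blast
      have d: "flowdist h k ?f < 1" using kf by simp
      have kD: "k \<in> Delta V E h" and kC: "\<forall>s. k s \<in> C" using k unfolding lift_def by auto
      have fval: "?f s = w n" if s: "0 \<le> s" "s < h" for s
      proof -
        have "of_int n * h \<le> s + of_int n * h \<and> s + of_int n * h < (of_int n + 1) * h"
          using s by (simp add: algebra_simps)
        then have "\<lfloor>(s + of_int n * h)/h\<rfloor> = n" using floor_div_eq[OF h] by blast
        then show ?thesis unfolding f stp_def by simp
      qed
      have "w n \<in> C"
      proof (rule ccontr)
        assume nC: "w n \<notin> C"
        have sub: "{0..<h} \<subseteq> {s. k s \<noteq> ?f s} \<inter> Iv h 0"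
        proof
          fix s assume s: "s \<in> {0..<h}"
          then have "?f s = w n" using fval by simp
          then have "k s \<noteq> ?f s" using kC nC by metis
          moreover have "s \<in> Iv h 0" using s unfolding Iv_def by simp
          ultimately show "s \<in> {s. k s \<noteq> ?f s} \<inter> Iv h 0" by simp
        qed
        have sk: "isstp h k" by (rule Delta_isstp[OF h kD])
        have sf: "isstp h ?f" unfolding f isstp_def by blast
        have "h - 0 \<le> mu h k ?f 0" by (rule mu_pos_interval[OF sk sf h sub h])
        then have "1 \<le> mu h k ?f 0 / h" using h by simp
        moreover have "wt 0 * (mu h k ?f 0 / h) \<le> flowdist h k ?f" by (rule fd_lower[OF sk sf h])
        ultimately show False using d unfolding wt_def by simp
      qed
      moreover have "x t0 = w n" unfolding xw stp_def n_def by simp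
      ultimately show ?thesis by simp
    qed
    then show ?thesis unfolding lift_def using x by blast
  qed
  show ?thesis unfolding isolated_def
  proof (intro exI conjI)
    show "N \<subseteq> Delta V E h" by (rule NM)
    show "lift V E h C \<subseteq> flowtop V E h interior_of N" using KN interior_of_openin[OF oN] by simp
    show "\<forall>x\<in>Delta V E h. (\<forall>t. psi t x \<in> N) \<longrightarrow> x \<in> lift V E h C" using orbit by blast
  qed
qed

lemma lift_nonempty:
  fixes V :: "'v set"
  assumes h: "h > 0" and C: "scc V E C"
  shows "lift V E h C \<noteq> {}"
proof -
  have sc: "strongly_connected_set E C" and CV: "C \<subseteq> V" using C unfolding scc_def by auto
  obtain u where u: "u \<in> C" using sc unfolding strongly_connected_set_def by auto
  have succ_ex: "\<exists>v'. (v, v') \<in> E \<and> v' \<in> C" if "v \<in> C" for v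
  proof -
    have "(v, v) \<in> (E \<inter> C \<times> C)\<^sup>+" using sc that unfolding strongly_connected_set_def by blast
    then obtain v' where "(v, v') \<in> E \<inter> C \<times> C" by (rule converse_tranclE) auto
    then show ?thesis by blast
  qed
  have pred_ex: "\<exists>v'. (v', v) \<in> E \<and> v' \<in> C" if "v \<in> C" for v
  proof -
    have "(v, v) \<in> (E \<inter> C \<times> C)\<^sup>+" using sc that unfolding strongly_connected_set_def by blast
    then obtain v' where "(v', v) \<in> E \<inter> C \<times> C" by (rule tranclE) auto
    then show ?thesis by blast
  qed
  define sc' where "sc' = (\<lambda>v. SOME v'. (v, v') \<in> E \<and> v' \<in> C)"
  define pr where "pr = (\<lambda>v. SOME v'. (v', v) \<in> E \<and> v' \<in> C)"
  have sc'_p: "(v, sc' v) \<in> E \<and> sc' v \<in> C" if "v \<in> C" for v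
    unfolding sc'_def using someI_ex[OF succ_ex[OF that]] .
  have pr_p: "(pr v, v) \<in> E \<and> pr v \<in> C" if "v \<in> C" for v
    unfolding pr_def using someI_ex[OF pred_ex[OF that]] .
  have scn: "(sc' ^^ n) u \<in> C" for n by (induction n) (use u sc'_p in auto)
  have prn: "(pr ^^ n) u \<in> C" for n by (induction n) (use u pr_p in auto)
  define w where "w = (\<lambda>i::int. if 0 \<le> i then (sc' ^^ nat i) u else (pr ^^ nat (- i)) u)"
  have wC: "w i \<in> C" for i unfolding w_def using scn prn by auto
  have wE: "(w i, w (i + 1)) \<in> E" for i
  proof (cases "0 \<le> i")
    case True
    then have "nat (i + 1) = Suc (nat i)" by simp
    then have "w (i + 1) = sc' (w i)" unfolding w_def using True by simp
    then show ?thesis using sc'_p[OF wC[of i]] by simp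
  next
    case False
    then have "nat (- i) = Suc (nat (- (i + 1)))" by simp
    then have wi: "w i = pr ((pr ^^ nat (- (i + 1))) u)" unfolding w_def using False by simp
    show ?thesis
    proof (cases "i = -1")
      case True
      then show ?thesis using wi pr_p[OF u] unfolding w_def by simp
    next
      case False
      then have "w (i + 1) = (pr ^^ nat (- (i + 1))) u" unfolding w_def using \<open>\<not> 0 \<le> i\<close> by simp
      then show ?thesis using wi pr_p[OF prn] by simp
    qed
  qed
  have w: "w \<in> Omega V E" unfolding Omega_def using wC wE CV by blast
  have "stp h w 0 \<in> lift V E h C"
    unfolding lift_def using stp_in_Delta[OF h w] wC unfolding stp_def by blast
  then show ?thesis by blast
qed

definition reach :: "('v \<times> 'v) set \<Rightarrow> 'v set \<Rightarrow> 'v set \<Rightarrow> bool" where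
  "reach E A B \<longleftrightarrow> (\<exists>a\<in>A. \<exists>b\<in>B. (a, b) \<in> E\<^sup>*)"

lemma reach_trans:
  assumes "scc V E B" "reach E A B" "reach E B C"
  shows "reach E A C"
proof -
  obtain a b where ab: "a \<in> A" "b \<in> B" "(a, b) \<in> E\<^sup>*" using assms(2) unfolding reach_def by blast
  obtain b' c where bc: "b' \<in> B" "c \<in> C" "(b', c) \<in> E\<^sup>*" using assms(3) unfolding reach_def by blast
  have "strongly_connected_set E B" using assms(1) unfolding scc_def by blast
  then have "(b, b') \<in> E\<^sup>+" using sc_trancl ab(2) bc(1) by metis
  then have "(a, c) \<in> E\<^sup>*" using ab(3) bc(3) by (meson rtrancl_trans trancl_into_rtrancl)
  then show ?thesis unfolding reach_def using ab(1) bc(2) by blast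
qed

lemma reach_refl:
  assumes "scc V E A"
  shows "reach E A A"
proof -
  obtain a where "a \<in> A" using assms unfolding scc_def strongly_connected_set_def by blast
  then show ?thesis unfolding reach_def by blast
qed

lemma step_rel:
  fixes V :: "'v set"
  assumes h: "h > 0" and fin: "finite V" and EV: "E \<subseteq> V \<times> V"
    and x: "x \<in> Delta V E h" and nx: "\<And>D. scc V E D \<Longrightarrow> x \<notin> lift V E h D"
    and D1: "scc V E D1" and D2: "scc V E D2"
    and al: "alpha_lim V E h x \<subseteq> lift V E h D1" and om: "omega_lim V E h x \<subseteq> lift V E h D2"
  shows "D1 \<noteq> D2" "reach E D1 D2"
proof -
  obtain w c where w: "w \<in> Omega V E" and xw: "x = stp h w c" using x Delta_rep[OF h] by blast
  obtain y where y: "y \<in> alpha_lim V E h x" using lim_ne[OF h fin x] by blast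
  obtain z where z: "z \<in> omega_lim V E h x" using lim_ne[OF h fin x] by blast
  have a1: "y 0 \<in> D1" using al y unfolding lift_def by blast
  have a2: "y 0 \<in> Rm w" using alpha_Rm[OF h y[unfolded xw]] by blast
  have b1: "z 0 \<in> D2" using om z unfolding lift_def by blast
  have b2: "z 0 \<in> Rp w" using omega_Rp[OF h z[unfolded xw]] by blast
  have between: "(y 0, w k) \<in> E\<^sup>* \<and> (w k, z 0) \<in> E\<^sup>*" for k
  proof -
    obtain i where i: "i \<le> k" "w i = y 0" using a2 unfolding Rm_def by blast
    obtain j where j: "j \<ge> k" "w j = z 0" using b2 unfolding Rp_def by blast
    show ?thesis using path_rtrancl'[OF w i(1)] path_rtrancl'[OF w j(1)] i(2) j(2) by simp
  qed
  have "(y 0, z 0) \<in> E\<^sup>*" using between[of 0] by (meson rtrancl_trans)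
  then show "reach E D1 D2" unfolding reach_def using a1 b1 by blast
  show "D1 \<noteq> D2"
  proof
    assume eq: "D1 = D2"
    have "w k \<in> D1" for k
      using scc_between[OF EV D1 a1 _ conjunct1[OF between[of k]] conjunct2[OF between[of k]]] b1 eq by blast
    then have "\<forall>t. x t \<in> D1" unfolding xw stp_def by blast
    then have "x \<in> lift V E h D1" unfolding lift_def using x by blast
    then show False using nx[OF D1] by blast
  qed
qed

theorem mainTheorem6:
  fixes V :: "'v set" and E :: "('v \<times> 'v) set" and h :: real
  assumes "finite V" and "E \<subseteq> V \<times> V" and "h > 0"
  shows "morse_decomposition V E h {lift V E h C | C. scc V E C}"
proof -
  note fin = assms(1) and EV = assms(2) and h = assms(3)
  define Ms where "Ms = {lift V E h C | C. scc V E C}"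
  have fMs: "finite Ms"
  proof -
    have "Ms = lift V E h ` {C. scc V E C}" unfolding Ms_def by blast
    moreover have "finite {C. scc V E C}"
      using finite_Pow_iff[of V] fin by (rule_tac finite_subset[of _ "Pow V"]) (auto simp: scc_def)
    ultimately show ?thesis by simp
  qed
  have props: "\<forall>K\<in>Ms. K \<noteq> {} \<and> K \<subseteq> Delta V E h \<and> invariant K \<and> isolated V E h K \<and> compactin (flowtop V E h) K"
  proof
    fix K assume "K \<in> Ms"
    then obtain C where C: "scc V E C" and K: "K = lift V E h C" unfolding Ms_def by blast
    have CV: "C \<subseteq> V" using C unfolding scc_def by blast
    show "K \<noteq> {} \<and> K \<subseteq> Delta V E h \<and> invariant K \<and> isolated V E h K \<and> compactin (flowtop V E h) K"
      unfolding K using lift_nonempty[OF h C] lift_invariant[OF h] lift_isolated[OF h] compact_lift[OF h CV fin]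
      unfolding lift_def by blast
  qed
  have disj: "\<forall>K\<in>Ms. \<forall>K'\<in>Ms. K \<noteq> K' \<longrightarrow> K \<inter> K' = {}"
  proof (intro ballI impI)
    fix K K' assume "K \<in> Ms" "K' \<in> Ms" and ne: "K \<noteq> K'"
    then obtain C C' where C: "scc V E C" "K = lift V E h C" and C': "scc V E C'" "K' = lift V E h C'"
      unfolding Ms_def by blast
    show "K \<inter> K' = {}"
    proof (rule ccontr)
      assume "K \<inter> K' \<noteq> {}"
      then obtain f where "f \<in> K" "f \<in> K'" by blast
      then have "f 0 \<in> C \<inter> C'" using C C' unfolding lift_def by blast
      then have "C = C'" using scc_eq[OF EV C(1) C'(1)] by blast
      then show False using ne C C' by simp
    qed
  qed
  have lims: "\<forall>x \<in> Delta V E h. omega_lim V E h x \<subseteq> \<Union>Ms \<and> alpha_lim V E h x \<subseteq> \<Union>Ms"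
  proof
    fix x assume x: "x \<in> Delta V E h"
    obtain w c where w: "w \<in> Omega V E" and xw: "x = stp h w c" using x Delta_rep[OF h] by blast
    obtain Cp where Cp: "scc V E Cp" "Rp w \<subseteq> Cp" using sc_in_scc[OF EV Rp_props(3)[OF fin w]] by blast
    obtain Cm where Cm: "scc V E Cm" "Rm w \<subseteq> Cm" using sc_in_scc[OF EV Rm_props(2)[OF fin w]] by blast
    have "omega_lim V E h x \<subseteq> lift V E h Cp"
    proof
      fix y assume y: "y \<in> omega_lim V E h x"
      show "y \<in> lift V E h Cp" unfolding lift_def
        using omega_Rp[OF h y[unfolded xw]] Cp(2) by blast
    qed
    moreover have "alpha_lim V E h x \<subseteq> lift V E h Cm"
    proof
      fix y assume y: "y \<in> alpha_lim V E h x"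
      show "y \<in> lift V E h Cm" unfolding lift_def
        using alpha_Rm[OF h y[unfolded xw]] Cm(2) by blast
    qed
    moreover have "lift V E h Cp \<in> Ms" "lift V E h Cm \<in> Ms" unfolding Ms_def using Cp Cm by blast+
    ultimately show "omega_lim V E h x \<subseteq> \<Union>Ms \<and> alpha_lim V E h x \<subseteq> \<Union>Ms" by blast
  qed
  have nocyc: "\<forall>l::nat. \<forall>j::nat \<Rightarrow> (real \<Rightarrow> 'v) set. \<forall>x::nat \<Rightarrow> (real \<Rightarrow> 'v).
        l \<ge> 1 \<and> (\<forall>m\<le>l. j m \<in> Ms) \<and>
        (\<forall>m\<in>{1..l}. x m \<in> Delta V E h \<and> x m \<notin> \<Union>Ms \<and>
            alpha_lim V E h (x m) \<subseteq> j (m - 1) \<and> omega_lim V E h (x m) \<subseteq> j m)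
        \<longrightarrow> j 0 \<noteq> j l"
  proof (intro allI impI)
    fix l :: nat and j :: "nat \<Rightarrow> (real \<Rightarrow> 'v) set" and x :: "nat \<Rightarrow> (real \<Rightarrow> 'v)"
    assume A: "l \<ge> 1 \<and> (\<forall>m\<le>l. j m \<in> Ms) \<and>
        (\<forall>m\<in>{1..l}. x m \<in> Delta V E h \<and> x m \<notin> \<Union>Ms \<and>
            alpha_lim V E h (x m) \<subseteq> j (m - 1) \<and> omega_lim V E h (x m) \<subseteq> j m)"
    define D where "D = (\<lambda>m. SOME D. scc V E D \<and> j m = lift V E h D)"
    have Dp: "scc V E (D m) \<and> j m = lift V E h (D m)" if "m \<le> l" for m
    proof -
      have "\<exists>D. scc V E D \<and> j m = lift V E h D" using A that unfolding Ms_def by blast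
      then show ?thesis unfolding D_def by (rule someI_ex)
    qed
    have st: "D (m - 1) \<noteq> D m \<and> reach E (D (m - 1)) (D m)" if m: "1 \<le> m" "m \<le> l" for m
    proof -
      have xm: "x m \<in> Delta V E h" "x m \<notin> \<Union>Ms"
        "alpha_lim V E h (x m) \<subseteq> j (m - 1)" "omega_lim V E h (x m) \<subseteq> j m"
        using A m by auto
      have nx: "x m \<notin> lift V E h D'" if "scc V E D'" for D'
        using xm(2) that unfolding Ms_def by blast
      have D1: "scc V E (D (m - 1))" "j (m - 1) = lift V E h (D (m - 1))" using Dp[of "m - 1"] m by auto
      have D2: "scc V E (D m)" "j m = lift V E h (D m)" using Dp[of m] m by auto
      show ?thesis using step_rel[OF h fin EV xm(1) nx D1(1) D2(1)] xm(3,4) D1(2) D2(2) by simp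
    qed
    have rch: "1 \<le> m \<longrightarrow> m \<le> l \<longrightarrow> reach E (D 1) (D m)" for m
    proof (induction m)
      case 0 then show ?case by simp
    next
      case (Suc m)
      show ?case
      proof (intro impI)
        assume m: "1 \<le> Suc m" "Suc m \<le> l"
        show "reach E (D 1) (D (Suc m))"
        proof (cases "m = 0")
          case True
          have "scc V E (D 1)" using Dp[of 1] m by simp
          then show ?thesis using True reach_refl by simp
        next
          case False
          then have r1: "reach E (D 1) (D m)" using Suc.IH m by simp
          have "reach E (D m) (D (Suc m))" using st[of "Suc m"] m by simp
          moreover have "scc V E (D m)" using Dp[of m] m by simp
          ultimately show ?thesis using reach_trans r1 by blast
        qed
      qed
    qed
    show "j 0 \<noteq> j l"
    proof
      assume eq: "j 0 = j l"
      have l1: "1 \<le> l" using A by simp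
      have D0l: "D 0 = D l" unfolding D_def using eq by simp
      have s01: "D 0 \<noteq> D 1" "reach E (D 0) (D 1)" using st[of 1] l1 by auto
      have r10: "reach E (D 1) (D 0)" using rch[of l] l1 D0l by simp
      have sc0: "scc V E (D 0)" and sc1: "scc V E (D 1)" using Dp[of 0] Dp[of 1] l1 by auto
      obtain a b where ab: "a \<in> D 0" "b \<in> D 1" "(a, b) \<in> E\<^sup>*" using s01(2) unfolding reach_def by blast
      obtain b' a' where ba: "b' \<in> D 1" "a' \<in> D 0" "(b', a') \<in> E\<^sup>*" using r10 unfolding reach_def by blast
      have "strongly_connected_set E (D 1)" using sc1 unfolding scc_def by blast
      then have "(b, b') \<in> E\<^sup>+" using sc_trancl ab(2) ba(1) by metis
      then have "(b, a') \<in> E\<^sup>*" using ba(3) by (meson rtrancl_trans trancl_into_rtrancl)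
      then have "b \<in> D 0" using scc_between[OF EV sc0 ab(1) ba(2) ab(3)] by simp
      then have "D 0 \<inter> D 1 \<noteq> {}" using ab(2) by blast
      then have "D 0 = D 1" by (rule scc_eq[OF EV sc0 sc1])
      then show False using s01(1) by simp
    qed
  qed
  show ?thesis unfolding morse_decomposition_def Ms_def[symmetric]
    using fMs props disj lims nocyc by blast
qed

end
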